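(* Let $\mathbb X$ be a basic space and $\mathcal D=(D,<,\rho)$ a computable partially ordered set. There exists a function $E:\mathbb N\times\mathbb X\to D$ in $\mathrm{Max}_{\mathrm{PR}}[\mathbb N\times\mathbb X\to\mathcal D]$ such that $\{E_n:n\in\mathbb N\}=\mathrm{Max}_{\mathrm{PR}}[\mathbb X\to\mathcal D]$, where $E_n:\mathbb X\to D$ is the partial function $x\mapsto E(n,x)$.
   Context: A basic space is a finite non-empty product of sets each of which is $\mathbb N$, $\mathbb Z$, or $A^*$ for some finite alphabet $A$. A computable partially ordered set is a triple $\mathcal D=(D,<,\rho)$ where $\rho:\mathbb N\to D$ is a bijection and $<$ is a strict partial order on $D$ with $\{(m,n):\rho(m)<\rho(n)\}$ computable; a partial function into $D$ is partial computable if its composition with $\rho^{-1}$ is. For a basic space $\mathbb Y$ and a partial $f:\mathbb Y\times\mathbb N\to D$ monotone increasing in its second argument on its domain, $\max^{\mathcal D}f$ is the partial function on $\mathbb Y$ defined exactly at those $y$ for which $\{f(y,t):t\in\mathbb N,\ f(y,t)\text{ defined}\}$ is finite and non-empty, with value its maximum element. $\mathrm{Max}_{\mathrm{PR}}[\mathbb Y\to\mathcal D]$ is the class of all $\max^{\mathcal D}f$ with $f$ partial computable and monotone increasing in its second argument. *)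

theory Defs
  imports Main "HOL-Library.Nat_Bijection"
begin

text \<open>A function of arity n is represented as a map on nat lists; only its
behaviour on lists of length n is relevant.\<close>

fun prec :: "(nat list \<Rightarrow> nat option) \<Rightarrow> (nat list \<Rightarrow> nat option) \<Rightarrow> nat \<Rightarrow> nat list \<Rightarrow> nat option" where
  "prec g h 0 ys = g ys"
| "prec g h (Suc k) ys = (case prec g h k ys of None \<Rightarrow> None | Some r \<Rightarrow> h (k # r # ys))"

definition mu :: "(nat list \<Rightarrow> nat option) \<Rightarrow> nat list \<Rightarrow> nat option" where
  "mu g xs = (if \<exists>k. g (k # xs) = Some 0 \<and> (\<forall>j<k. g (j # xs) \<noteq> None)
              then Some (LEAST k. g (k # xs) = Some 0 \<and> (\<forall>j<k. g (j # xs) \<noteq> None))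
              else None)"

inductive precfn :: "nat \<Rightarrow> (nat list \<Rightarrow> nat option) \<Rightarrow> bool" where
  zero: "precfn n (\<lambda>xs. Some 0)"
| succ: "precfn 1 (\<lambda>xs. Some (Suc (hd xs)))"
| proj: "i < n \<Longrightarrow> precfn n (\<lambda>xs. Some (xs ! i))"
| comp: "precfn m g \<Longrightarrow> length gs = m \<Longrightarrow> (\<forall>h\<in>set gs. precfn n h) \<Longrightarrow>
         precfn n (\<lambda>xs. if (\<forall>h\<in>set gs. h xs \<noteq> None) then g (map (\<lambda>h. the (h xs)) gs) else None)"
| prim_rec: "precfn n g \<Longrightarrow> precfn (n + 2) h \<Longrightarrow> precfn (Suc n) (\<lambda>xs. prec g h (hd xs) (tl xs))"
| minim: "precfn (Suc n) g \<Longrightarrow> precfn n (mu g)"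

definition partrec1 :: "(nat \<Rightarrow> nat option) \<Rightarrow> bool" where
  "partrec1 g \<longleftrightarrow> (\<exists>F. precfn 1 F \<and> (\<forall>x. g x = F [x]))"

definition totalrec1 :: "(nat \<Rightarrow> nat) \<Rightarrow> bool" where
  "totalrec1 g \<longleftrightarrow> partrec1 (\<lambda>x. Some (g x))"

text \<open>A component is \<open>\<nat>\<close> (CN), \<open>\<int>\<close> (CZ) or \<open>A\<^sup>*\<close> with A = {0..<k} (CW k).
A basic space is a nonempty list of components; its elements are lists of values.\<close>

datatype bcomp = CN | CZ | CW nat
datatype bval = VN nat | VZ int | VW "nat list"

fun in_comp :: "bcomp \<Rightarrow> bval \<Rightarrow> bool" where
  "in_comp CN (VN _) = True"
| "in_comp CZ (VZ _) = True"
| "in_comp (CW k) (VW w) = (\<forall>a\<in>set w. a < k)"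
| "in_comp _ _ = False"

definition in_space :: "bcomp list \<Rightarrow> bval list \<Rightarrow> bool" where
  "in_space X v \<longleftrightarrow> list_all2 in_comp X v"

fun enc_val :: "bval \<Rightarrow> nat" where
  "enc_val (VN n) = prod_encode (0, n)"
| "enc_val (VZ i) = prod_encode (1, int_encode i)"
| "enc_val (VW w) = prod_encode (2, list_encode w)"

definition enc :: "bval list \<Rightarrow> nat" where
  "enc v = list_encode (map enc_val v)"

definition computable_poset :: "('d \<Rightarrow> 'd \<Rightarrow> bool) \<Rightarrow> (nat \<Rightarrow> 'd) \<Rightarrow> bool" where
  "computable_poset lt \<rho> \<longleftrightarrow> bij \<rho> \<and> (\<forall>a. \<not> lt a a) \<and>
     (\<forall>a b c. lt a b \<longrightarrow> lt b c \<longrightarrow> lt a c) \<and>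
     totalrec1 (\<lambda>p. if lt (\<rho> (fst (prod_decode p))) (\<rho> (snd (prod_decode p))) then 1 else 0)"

text \<open>Partial computable f : Y \<times> \<nat> \<rightharpoonup> D (the pair (y,t) is the element y @ [VN t] of Y \<times> \<nat>).\<close>
definition pc2 :: "(nat \<Rightarrow> 'd) \<Rightarrow> bcomp list \<Rightarrow> (bval list \<Rightarrow> nat \<Rightarrow> 'd option) \<Rightarrow> bool" where
  "pc2 \<rho> Y f \<longleftrightarrow> (\<exists>g. partrec1 g \<and>
      (\<forall>y t. in_space Y y \<longrightarrow> map_option (inv \<rho>) (f y t) = g (enc (y @ [VN t]))))"

definition mono2 :: "('d \<Rightarrow> 'd \<Rightarrow> bool) \<Rightarrow> (bval list \<Rightarrow> nat \<Rightarrow> 'd option) \<Rightarrow> bool" where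
  "mono2 lt f \<longleftrightarrow> (\<forall>y t t' a b. t \<le> t' \<longrightarrow> f y t = Some a \<longrightarrow> f y t' = Some b \<longrightarrow> a = b \<or> lt a b)"

definition maxD :: "('d \<Rightarrow> 'd \<Rightarrow> bool) \<Rightarrow> (bval list \<Rightarrow> nat \<Rightarrow> 'd option) \<Rightarrow> bval list \<Rightarrow> 'd option" where
  "maxD lt f y = (let S = {a. \<exists>t. f y t = Some a} in
     if finite S \<and> S \<noteq> {} then Some (THE m. m \<in> S \<and> (\<forall>s\<in>S. s = m \<or> lt s m)) else None)"

text \<open>Partial functions on a basic space Y are represented as maps bval list \<Rightarrow> 'd option
that are undefined outside Y.\<close>
definition MaxPR :: "bcomp list \<Rightarrow> ('d \<Rightarrow> 'd \<Rightarrow> bool) \<Rightarrow> (nat \<Rightarrow> 'd) \<Rightarrow> (bval list \<Rightarrow> 'd option) set" where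
  "MaxPR Y lt \<rho> = {maxD lt f | f. pc2 \<rho> Y f \<and> mono2 lt f \<and>
                                   (\<forall>y t. \<not> in_space Y y \<longrightarrow> f y t = None)}"

end

theory Submission
  imports Defs
begin


definition pr :: "nat \<Rightarrow> (nat list \<Rightarrow> nat option) \<Rightarrow> bool" where
  "pr n G \<longleftrightarrow> (\<exists>F. precfn n F \<and> (\<forall>xs. length xs = n \<longrightarrow> F xs = G xs))"

lemma pr_cong: "pr n f \<Longrightarrow> (\<And>xs. length xs = n \<Longrightarrow> f xs = g xs) \<Longrightarrow> pr n g"
  unfolding pr_def by metis

lemma precfn_pr: "precfn n F \<Longrightarrow> pr n F"
  unfolding pr_def by blast

lemma pr_zero: "pr n (\<lambda>xs. Some 0)" by (rule precfn_pr, rule precfn.zero)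
lemma pr_succ: "pr 1 (\<lambda>xs. Some (Suc (hd xs)))" by (rule precfn_pr, rule precfn.succ)
lemma pr_proj: "i < n \<Longrightarrow> pr n (\<lambda>xs. Some (xs ! i))" by (rule precfn_pr, rule precfn.proj)

lemma list_choice: "\<forall>x\<in>set xs. \<exists>y. P x y \<Longrightarrow> \<exists>ys. list_all2 P xs ys"
  by (induction xs) (auto intro: list_all2_Cons[THEN iffD2])

lemma pr_comp:
  assumes g: "pr m g" and l: "length gs = m" and hs: "\<forall>h\<in>set gs. pr n h"
  shows "pr n (\<lambda>xs. if (\<forall>h\<in>set gs. h xs \<noteq> None) then g (map (\<lambda>h. the (h xs)) gs) else None)"
proof -
  obtain G where G: "precfn m G" "\<forall>xs. length xs = m \<longrightarrow> G xs = g xs" using g unfolding pr_def by blast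
  have "\<forall>h\<in>set gs. \<exists>F. precfn n F \<and> (\<forall>xs. length xs = n \<longrightarrow> F xs = h xs)"
    using hs unfolding pr_def by blast
  from list_choice[OF this] obtain Fs where Fs: "list_all2 (\<lambda>h F. precfn n F \<and> (\<forall>xs. length xs = n \<longrightarrow> F xs = h xs)) gs Fs"
    by (elim exE)
  have lf: "length Fs = m" using Fs l list_all2_lengthD by fastforce
  have pF: "\<forall>h\<in>set Fs. precfn n h"
  proof
    fix F assume "F \<in> set Fs"
    then obtain i where i: "i < length Fs" "F = Fs ! i" by (metis in_set_conv_nth)
    show "precfn n F" using list_all2_nthD2[OF Fs i(1)] i(2) by simp
  qed
  have eqs: "map (\<lambda>h. h xs) Fs = map (\<lambda>h. h xs) gs" if len: "length xs = n" for xs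
  proof (rule nth_equalityI)
    show "length (map (\<lambda>h. h xs) Fs) = length (map (\<lambda>h. h xs) gs)" using lf l by simp
    fix i assume "i < length (map (\<lambda>h. h xs) Fs)"
    then have i: "i < length Fs" by simp
    have "gs ! i = gs ! i \<and> True" by simp
    from list_all2_nthD2[OF Fs i] len show "map (\<lambda>h. h xs) Fs ! i = map (\<lambda>h. h xs) gs ! i"
      using i lf l by simp
  qed
  show ?thesis unfolding pr_def
  proof (intro exI conjI allI impI)
    show "precfn n (\<lambda>xs. if (\<forall>h\<in>set Fs. h xs \<noteq> None) then G (map (\<lambda>h. the (h xs)) Fs) else None)"
      using precfn.comp[OF G(1) lf pF] .
    fix xs :: "nat list" assume len: "length xs = n"
    have e: "map (\<lambda>h. h xs) Fs = map (\<lambda>h. h xs) gs" using eqs[OF len] .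
    have a: "(\<forall>h\<in>set Fs. h xs \<noteq> None) = (\<forall>h\<in>set gs. h xs \<noteq> None)"
    proof -
      have "(\<forall>h\<in>set Fs. h xs \<noteq> None) = (\<forall>v\<in>set (map (\<lambda>h. h xs) Fs). v \<noteq> None)" by simp
      also have "\<dots> = (\<forall>v\<in>set (map (\<lambda>h. h xs) gs). v \<noteq> None)" using e by simp
      also have "\<dots> = (\<forall>h\<in>set gs. h xs \<noteq> None)" by simp
      finally show ?thesis .
    qed
    have b: "map (\<lambda>h. the (h xs)) Fs = map (\<lambda>h. the (h xs)) gs"
      using arg_cong[OF e, of "map the"] by (simp add: comp_def)
    have lm: "length (map (\<lambda>h. the (h xs)) gs) = m" using l by simp
    show "(if (\<forall>h\<in>set Fs. h xs \<noteq> None) then G (map (\<lambda>h. the (h xs)) Fs) else None) =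
          (if (\<forall>h\<in>set gs. h xs \<noteq> None) then g (map (\<lambda>h. the (h xs)) gs) else None)"
      unfolding a b using G(2)[rule_format, OF lm] by (rule if_cong[OF refl _ refl])
  qed
qed

lemma prec_cong:
  assumes G: "\<And>ys. length ys = n \<Longrightarrow> G ys = g ys" and H: "\<And>zs. length zs = n + 2 \<Longrightarrow> H zs = h zs"
    and l: "length ys = n"
  shows "prec G H k ys = prec g h k ys"
proof (induction k)
  case 0 show ?case using G[OF l] by simp
next
  case (Suc k)
  show ?case
  proof (cases "prec g h k ys")
    case None then show ?thesis using Suc by simp
  next
    case (Some r)
    have "H (k # r # ys) = h (k # r # ys)" using H l by simp
    then show ?thesis using Suc Some by simp
  qed
qed

lemma pr_prim_rec: "pr n g \<Longrightarrow> pr (n + 2) h \<Longrightarrow> pr (Suc n) (\<lambda>xs. prec g h (hd xs) (tl xs))"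
proof -
  assume "pr n g" "pr (n+2) h"
  then obtain G H where G: "precfn n G" "\<forall>xs. length xs = n \<longrightarrow> G xs = g xs"
    and H: "precfn (n+2) H" "\<forall>xs. length xs = n+2 \<longrightarrow> H xs = h xs" unfolding pr_def by blast
  show ?thesis unfolding pr_def
  proof (intro exI conjI allI impI)
    show "precfn (Suc n) (\<lambda>xs. prec G H (hd xs) (tl xs))" by (rule precfn.prim_rec[OF G(1) H(1)])
    fix xs :: "nat list" assume "length xs = Suc n"
    then have "length (tl xs) = n" by simp
    from prec_cong[of n G g H h, OF G(2)[rule_format] H(2)[rule_format] this]
    show "prec G H (hd xs) (tl xs) = prec g h (hd xs) (tl xs)" by simp
  qed
qed

lemma mu_cong: "(\<And>k. G (k # xs) = g (k # xs)) \<Longrightarrow> mu G xs = mu g xs"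
  unfolding mu_def by simp

lemma pr_mu: "pr (Suc n) g \<Longrightarrow> pr n (mu g)"
proof -
  assume "pr (Suc n) g"
  then obtain G where G: "precfn (Suc n) G" "\<forall>xs. length xs = Suc n \<longrightarrow> G xs = g xs" unfolding pr_def by blast
  show ?thesis unfolding pr_def
  proof (intro exI conjI allI impI)
    show "precfn n (mu G)" by (rule precfn.minim[OF G(1)])
    fix xs :: "nat list" assume l: "length xs = n"
    show "mu G xs = mu g xs" by (rule mu_cong) (use G(2) l in simp)
  qed
qed


definition tot :: "nat \<Rightarrow> (nat list \<Rightarrow> nat) \<Rightarrow> bool" where
  "tot n f \<longleftrightarrow> pr n (\<lambda>xs. Some (f xs))"

lemma len1: "length xs = 1 \<Longrightarrow> xs = [hd xs]"
  by (cases xs) auto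
lemma len2: "length xs = 2 \<Longrightarrow> xs = [xs!0, xs!1]"
  by (cases xs; cases "tl xs") auto
lemma len3: "length xs = 3 \<Longrightarrow> xs = [xs!0, xs!1, xs!2]"
  by (cases xs; cases "tl xs"; cases "tl (tl xs)") auto

lemma tot_cong: "tot n f \<Longrightarrow> (\<And>xs. length xs = n \<Longrightarrow> f xs = g xs) \<Longrightarrow> tot n g"
  unfolding tot_def by (erule pr_cong) simp

lemma tot_zero: "tot n (\<lambda>xs. 0)" unfolding tot_def by (rule pr_zero)
lemma tot_succ: "tot 1 (\<lambda>xs. Suc (hd xs))" unfolding tot_def by (rule pr_succ)
lemma tot_proj: "i < n \<Longrightarrow> tot n (\<lambda>xs. xs ! i)" unfolding tot_def by (rule pr_proj)

lemma tot_comp: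
  assumes "tot m g" "length fs = m" "\<forall>f\<in>set fs. tot n f"
  shows "tot n (\<lambda>xs. g (map (\<lambda>f. f xs) fs))"
proof -
  have "pr n (\<lambda>xs. if (\<forall>h\<in>set (map (\<lambda>f xs. Some (f xs)) fs). h xs \<noteq> None)
          then (\<lambda>ys. Some (g ys)) (map (\<lambda>h. the (h xs)) (map (\<lambda>f xs. Some (f xs)) fs)) else None)"
    by (rule pr_comp) (use assms in \<open>auto simp: tot_def\<close>)
  then show ?thesis unfolding tot_def by (rule pr_cong) (simp add: comp_def)
qed

lemma prec_tot: "prec (\<lambda>ys. Some (g ys)) (\<lambda>zs. Some (h zs)) k ys = Some (rec_nat (g ys) (\<lambda>k r. h (k # r # ys)) k)"
  by (induction k) auto

lemma tot_prec:
  assumes "tot n g" "tot m h" "m = n + 2" "k = Suc n"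
  shows "tot k (\<lambda>xs. rec_nat (g (tl xs)) (\<lambda>k r. h (k # r # tl xs)) (hd xs))"
proof -
  have "pr k (\<lambda>xs. prec (\<lambda>ys. Some (g ys)) (\<lambda>zs. Some (h zs)) (hd xs) (tl xs))"
    using assms(1,2) unfolding tot_def assms(3,4) by (rule pr_prim_rec)
  then show ?thesis unfolding tot_def prec_tot .
qed

lemma tot_comp1: "tot 1 g \<Longrightarrow> tot n f \<Longrightarrow> tot n (\<lambda>xs. g [f xs])"
  using tot_comp[of 1 g "[f]" n] by simp
lemma tot_comp2: "tot 2 g \<Longrightarrow> tot n f1 \<Longrightarrow> tot n f2 \<Longrightarrow> tot n (\<lambda>xs. g [f1 xs, f2 xs])"
  using tot_comp[of 2 g "[f1,f2]" n] by simp
lemma tot_comp3: "tot 3 g \<Longrightarrow> tot n f1 \<Longrightarrow> tot n f2 \<Longrightarrow> tot n f3 \<Longrightarrow> tot n (\<lambda>xs. g [f1 xs, f2 xs, f3 xs])"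
  using tot_comp[of 3 g "[f1,f2,f3]" n] by simp

lemma tot_const: "tot n (\<lambda>xs. c)"
proof (induction c)
  case 0 show ?case by (rule tot_zero)
next
  case (Suc c)
  from tot_comp1[OF tot_succ Suc] show ?case by simp
qed

lemma tot_add: "tot 2 (\<lambda>xs. xs!0 + xs!1)"
proof -
  have h: "tot 3 (\<lambda>zs. Suc (zs ! 1))" using tot_comp1[OF tot_succ tot_proj[of 1 3, simplified]] by simp
  have "tot 2 (\<lambda>xs. rec_nat (tl xs ! 0) (\<lambda>k r. Suc (( k # r # tl xs) ! 1)) (hd xs))"
    by (rule tot_prec[OF tot_proj[of 0 1, simplified] h]) simp_all
  then show ?thesis
  proof (rule tot_cong)
    fix xs :: "nat list" assume "length xs = 2"
    then obtain a b where xs: "xs = [a,b]" using len2 by blast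
    show "rec_nat (tl xs ! 0) (\<lambda>k r. Suc ((k # r # tl xs) ! 1)) (hd xs) = xs ! 0 + xs ! 1"
      unfolding xs by (induction a) auto
  qed
qed

lemma tot_pred: "tot 1 (\<lambda>xs. hd xs - 1)"
proof -
  have "tot 1 (\<lambda>xs. rec_nat 0 (\<lambda>k r. (k # r # tl xs) ! 0) (hd xs))"
    by (rule tot_prec[OF tot_zero[of 0] tot_proj[of 0 2, simplified]]) simp_all
  then show ?thesis
  proof (rule tot_cong)
    fix xs :: "nat list" assume "length xs = 1"
    show "rec_nat 0 (\<lambda>k r. (k # r # tl xs) ! 0) (hd xs) = hd xs - 1"
      by (cases "hd xs") auto
  qed
qed

lemma tot_sub: "tot 2 (\<lambda>xs. xs!0 - xs!1)"
proof -
  have h: "tot 3 (\<lambda>zs. hd [zs ! 1] - 1)" using tot_comp1[OF tot_pred tot_proj[of 1 3, simplified]] by simp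
  have "tot 2 (\<lambda>xs. rec_nat (tl xs ! 0) (\<lambda>k r. hd [(k # r # tl xs) ! 1] - 1) (hd xs))"
    by (rule tot_prec[OF tot_proj[of 0 1, simplified] h]) simp_all
  then have s: "tot 2 (\<lambda>xs. xs!1 - xs!0)"
  proof (rule tot_cong)
    fix xs :: "nat list" assume "length xs = 2"
    then obtain a b where xs: "xs = [a,b]" using len2 by blast
    show "rec_nat (tl xs ! 0) (\<lambda>k r. hd [(k # r # tl xs) ! 1] - 1) (hd xs) = xs ! 1 - xs ! 0"
      unfolding xs by (induction a) auto
  qed
  have "tot 2 (\<lambda>xs. [xs!1, xs!0] ! 1 - [xs!1, xs!0] ! 0)"
    using tot_comp2[OF s tot_proj[of 1 2, simplified] tot_proj[of 0 2, simplified]] by simp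
  then show ?thesis by simp
qed

lemma rec_tri: "rec_nat 0 (\<lambda>k r. r + Suc k) n = triangle n"
  by (induction n) auto

lemma tot_tri: "tot 1 (\<lambda>xs. triangle (hd xs))"
proof -
  have h: "tot 2 (\<lambda>zs. [zs ! 1, Suc (hd [zs ! 0])] ! 0 + [zs ! 1, Suc (hd [zs ! 0])] ! 1)"
    using tot_comp2[OF tot_add tot_proj[of 1 2, simplified] tot_comp1[OF tot_succ tot_proj[of 0 2, simplified]]] by simp
  have "tot 1 (\<lambda>xs. rec_nat 0 (\<lambda>k r. (k # r # tl xs) ! 1 + Suc ((k # r # tl xs) ! 0)) (hd xs))"
    by (rule tot_prec[OF tot_zero[of 0]], rule tot_cong[OF h]) simp_all
  then show ?thesis
  proof (rule tot_cong)
    fix xs :: "nat list" assume "length xs = 1"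
    show "rec_nat 0 (\<lambda>k r. (k # r # tl xs) ! 1 + Suc ((k # r # tl xs) ! 0)) (hd xs) = triangle (hd xs)"
      using rec_tri by simp
  qed
qed


lemma tot_pe: "tot 2 (\<lambda>xs. prod_encode (xs!0, xs!1))"
proof -
  have a: "tot 2 (\<lambda>xs. triangle (hd [xs!0 + xs!1]))" by (rule tot_comp1[OF tot_tri tot_add])
  have "tot 2 (\<lambda>xs. [triangle (hd [xs!0 + xs!1]), xs!0] ! 0 + [triangle (hd [xs!0 + xs!1]), xs!0] ! 1)"
    by (rule tot_comp2[OF tot_add a]) (rule tot_proj, simp)
  then show ?thesis by (simp add: prod_encode_def)
qed

definition ds :: "nat \<Rightarrow> nat" where "ds p = (LEAST s. p < triangle (Suc s))"

lemma ds_ex: "p < triangle (Suc p)" by (induction p) auto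

lemma decode_ds: "prod_decode p = (p - triangle (ds p), ds p - (p - triangle (ds p)))"
proof -
  define s where "s = ds p"
  have hi: "p < triangle (Suc s)" unfolding s_def ds_def by (rule LeastI[of _ p]) (rule ds_ex)
  have lo: "triangle s \<le> p"
  proof (cases s)
    case 0 then show ?thesis by simp
  next
    case (Suc s')
    have "s' < s" using Suc by simp
    then have "\<not> p < triangle (Suc s')" unfolding s_def ds_def by (rule not_less_Least)
    then show ?thesis using Suc by simp
  qed
  define a where "a = p - triangle s"
  have as: "a \<le> s" using hi lo unfolding a_def by simp
  have "prod_encode (a, s - a) = p" using as lo unfolding prod_encode_def a_def by simp
  then have "prod_decode p = (a, s - a)" by (metis prod_encode_inverse)
  then show ?thesis unfolding a_def s_def .
qed

lemma tot_ds: "tot 1 (\<lambda>xs. ds (hd xs))"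
proof -
  have t1: "tot 2 (\<lambda>xs. Suc (hd [xs!1]))" by (rule tot_comp1[OF tot_succ]) (rule tot_proj, simp)
  have t2: "tot 2 (\<lambda>xs. triangle (hd [Suc (hd [xs!0])]))"
    by (rule tot_comp1[OF tot_tri], rule tot_comp1[OF tot_succ]) (rule tot_proj, simp)
  have G: "tot 2 (\<lambda>xs. Suc (xs!1) - triangle (Suc (xs!0)))"
    using tot_comp2[OF tot_sub t1 t2] by simp
  have "pr 1 (mu (\<lambda>xs. Some (Suc (xs!1) - triangle (Suc (xs!0)))))"
    by (rule pr_mu) (use G in \<open>simp add: tot_def numeral_2_eq_2\<close>)
  then show ?thesis unfolding tot_def
  proof (rule pr_cong)
    fix xs :: "nat list" assume "length xs = 1"
    then obtain p where xs: "xs = [p]" using len1 by blast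
    have ex: "\<exists>k. Some (Suc p - triangle (Suc k)) = Some 0"
      apply (rule exI[of _ p]) using ds_ex[of p] by simp
    show "mu (\<lambda>xs. Some (Suc (xs ! 1) - triangle (Suc (xs ! 0)))) xs = Some (ds (hd xs))"
      unfolding xs mu_def ds_def using ex by (simp add: less_Suc_eq_le)
  qed
qed

definition pN :: "nat \<Rightarrow> nat \<Rightarrow> nat" where "pN a b = prod_encode (a, b)"
definition fN :: "nat \<Rightarrow> nat" where "fN n = fst (prod_decode n)"
definition sN :: "nat \<Rightarrow> nat" where "sN n = snd (prod_decode n)"

lemma fN_pN[simp]: "fN (pN a b) = a" and sN_pN[simp]: "sN (pN a b) = b"
  unfolding fN_def sN_def pN_def by simp_all

lemma pN_inj[simp]: "pN a b = pN c d \<longleftrightarrow> a = c \<and> b = d"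
  unfolding pN_def by simp

lemma pN_fN_sN: "pN (fN n) (sN n) = n" unfolding pN_def fN_def sN_def by simp

definition Ptot :: "(nat \<Rightarrow> nat) \<Rightarrow> bool" where
  "Ptot f \<longleftrightarrow> tot 1 (\<lambda>xs. f (hd xs))"

lemma Ptot_id: "Ptot (\<lambda>x. x)"
  unfolding Ptot_def by (rule tot_cong[OF tot_proj[of 0 1]]) (simp, case_tac xs, auto)

lemma Ptot_const: "Ptot (\<lambda>x. c)"
  unfolding Ptot_def by (rule tot_const)

lemma Ptot_comp: "Ptot h \<Longrightarrow> Ptot f \<Longrightarrow> Ptot (\<lambda>x. h (f x))"
  unfolding Ptot_def using tot_comp1[of "\<lambda>ys. h (hd ys)" 1 "\<lambda>xs. f (hd xs)"] by simp

lemma Ptot_op2: "tot 2 (\<lambda>xs. op (xs!0) (xs!1)) \<Longrightarrow> Ptot f \<Longrightarrow> Ptot g \<Longrightarrow> Ptot (\<lambda>x. op (f x) (g x))"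
  unfolding Ptot_def using tot_comp2[of "\<lambda>xs. op (xs!0) (xs!1)" 1 "\<lambda>xs. f (hd xs)" "\<lambda>xs. g (hd xs)"] by simp

lemma Ptot_op3: "tot 3 (\<lambda>xs. op (xs!0) (xs!1) (xs!2)) \<Longrightarrow> Ptot f \<Longrightarrow> Ptot g \<Longrightarrow> Ptot h \<Longrightarrow> Ptot (\<lambda>x. op (f x) (g x) (h x))"
  unfolding Ptot_def using tot_comp3[of "\<lambda>xs. op (xs!0) (xs!1) (xs!2)" 1 "\<lambda>xs. f (hd xs)" "\<lambda>xs. g (hd xs)" "\<lambda>xs. h (hd xs)"] by simp

lemma Ptot_add[intro]: "Ptot f \<Longrightarrow> Ptot g \<Longrightarrow> Ptot (\<lambda>x. f x + g x)"
  by (rule Ptot_op2[OF tot_add])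
lemma Ptot_sub[intro]: "Ptot f \<Longrightarrow> Ptot g \<Longrightarrow> Ptot (\<lambda>x. f x - g x)"
  by (rule Ptot_op2[OF tot_sub])
lemma Ptot_pN[intro]: "Ptot f \<Longrightarrow> Ptot g \<Longrightarrow> Ptot (\<lambda>x. pN (f x) (g x))"
  unfolding pN_def by (rule Ptot_op2[OF tot_pe])
lemma Ptot_Suc[intro]: "Ptot f \<Longrightarrow> Ptot (\<lambda>x. Suc (f x))"
proof -
  have "Ptot Suc" unfolding Ptot_def by (rule tot_succ)
  then show "Ptot f \<Longrightarrow> Ptot (\<lambda>x. Suc (f x))" by (rule Ptot_comp)
qed

lemma Ptot_ds: "Ptot ds" unfolding Ptot_def by (rule tot_ds)

lemma fN_ds: "fN p = p - triangle (ds p)" and sN_ds: "sN p = ds p - (p - triangle (ds p))"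
  unfolding fN_def sN_def by (simp_all add: decode_ds)

lemma Ptot_tri: "Ptot triangle" unfolding Ptot_def by (rule tot_tri)

lemma Ptot_fN0: "Ptot fN"
proof -
  have "Ptot (\<lambda>x. x - triangle (ds x))" by (intro Ptot_sub Ptot_id Ptot_comp[OF Ptot_tri] Ptot_ds)
  then show ?thesis by (simp add: fN_ds[abs_def])
qed
lemma Ptot_sN0: "Ptot sN"
proof -
  have "Ptot (\<lambda>x. ds x - (x - triangle (ds x)))" by (intro Ptot_sub Ptot_id Ptot_comp[OF Ptot_tri] Ptot_ds)
  then show ?thesis by (simp add: sN_ds[abs_def])
qed
lemma Ptot_fN[intro]: "Ptot f \<Longrightarrow> Ptot (\<lambda>x. fN (f x))" by (rule Ptot_comp[OF Ptot_fN0])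
lemma Ptot_sN[intro]: "Ptot f \<Longrightarrow> Ptot (\<lambda>x. sN (f x))" by (rule Ptot_comp[OF Ptot_sN0])

lemma tot_cond: "tot 3 (\<lambda>xs. if xs!0 = 0 then xs!1 else xs!2)"
proof -
  have "tot 3 (\<lambda>xs. rec_nat (tl xs ! 0) (\<lambda>k r. (k # r # tl xs) ! 3) (hd xs))"
    by (rule tot_prec[OF tot_proj[of 0 2, simplified] tot_proj[of 3 4, simplified]]) simp_all
  then show ?thesis
  proof (rule tot_cong)
    fix xs :: "nat list" assume "length xs = 3"
    then have "xs = [xs!0, xs!1, xs!2]" by (rule len3)
    then obtain a b c where xs: "xs = [a,b,c]" by blast
    show "rec_nat (tl xs ! 0) (\<lambda>k r. (k # r # tl xs) ! 3) (hd xs) = (if xs!0 = 0 then xs!1 else xs!2)"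
      unfolding xs by (cases a) (simp_all add: numeral_3_eq_3)
  qed
qed

lemma Ptot_if[intro]: "Ptot f \<Longrightarrow> Ptot g \<Longrightarrow> Ptot h \<Longrightarrow> Ptot k \<Longrightarrow> Ptot (\<lambda>x. if f x = g x then h x else k x)"
proof -
  assume a: "Ptot f" "Ptot g" "Ptot h" "Ptot k"
  have "Ptot (\<lambda>x. if (f x - g x) + (g x - f x) = 0 then h x else k x)"
    by (rule Ptot_op3[OF tot_cond]) (use a in auto)
  moreover have "\<And>x. ((f x - g x) + (g x - f x) = 0) = (f x = g x)" by auto
  ultimately show ?thesis by simp
qed

lemma rec_iter: "rec_nat z (\<lambda>k r. h r) n = (h ^^ n) z"
  by (induction n) auto

lemma Ptot_iter[intro]: "Ptot h \<Longrightarrow> Ptot f \<Longrightarrow> Ptot g \<Longrightarrow> Ptot (\<lambda>x. (h ^^ f x) (g x))"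
proof -
  assume h: "Ptot h" and fg: "Ptot f" "Ptot g"
  have hs: "tot 3 (\<lambda>zs. h (hd [zs ! 1]))"
    using h unfolding Ptot_def by (rule tot_comp1) (rule tot_proj, simp)
  have "tot 2 (\<lambda>xs. rec_nat (tl xs ! 0) (\<lambda>k r. h (hd [(k # r # tl xs) ! 1])) (hd xs))"
    by (rule tot_prec[OF tot_proj[of 0 1, simplified] hs]) simp_all
  then have "tot 2 (\<lambda>xs. (h ^^ xs!0) (xs!1))"
  proof (rule tot_cong)
    fix xs :: "nat list" assume "length xs = 2"
    then have "xs = [xs!0, xs!1]" by (rule len2)
    then obtain a b where xs: "xs = [a,b]" by blast
    show "rec_nat (tl xs ! 0) (\<lambda>k r. h (hd [(k # r # tl xs) ! 1])) (hd xs) = (h ^^ xs!0) (xs!1)"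
      unfolding xs by (simp add: rec_iter)
  qed
  then show ?thesis by (rule Ptot_op2[OF _ fg])
qed

lemma partrec1_pr: "partrec1 g \<longleftrightarrow> pr 1 (\<lambda>xs. g (hd xs))"
  unfolding partrec1_def pr_def
  by (metis One_nat_def len1 length_Cons list.sel(1) list.size(3))

lemma totalrec1_Ptot: "totalrec1 f \<longleftrightarrow> Ptot f"
  unfolding totalrec1_def Ptot_def tot_def partrec1_pr ..

lemma partrec1_comp: "partrec1 G \<Longrightarrow> Ptot h \<Longrightarrow> partrec1 (\<lambda>x. G (h x))"
proof -
  assume G: "partrec1 G" and h: "Ptot h"
  have "pr 1 (\<lambda>xs. if (\<forall>f\<in>set [\<lambda>xs. Some (h (hd xs))]. f xs \<noteq> None)
            then (\<lambda>ys. G (hd ys)) (map (\<lambda>f. the (f xs)) [\<lambda>xs. Some (h (hd xs))]) else None)"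
    by (rule pr_comp) (use G h in \<open>auto simp: partrec1_pr Ptot_def tot_def\<close>)
  then show ?thesis unfolding partrec1_pr by simp
qed

lemma partrec1_guard: "Ptot t \<Longrightarrow> Ptot v \<Longrightarrow> partrec1 (\<lambda>x. if t x = 0 then Some (v x) else None)"
proof -
  assume t: "Ptot t" and v: "Ptot v"
  have G: "tot 2 (\<lambda>xs. t (hd [xs!1]))"
    using t unfolding Ptot_def by (rule tot_comp1) (rule tot_proj, simp)
  have M: "pr 1 (mu (\<lambda>xs. Some (t (hd [xs!1]))))"
    by (rule pr_mu) (use G in \<open>simp add: tot_def numeral_2_eq_2\<close>)
  have V: "tot 2 (\<lambda>ys. v (hd [ys!1]))"
    using v unfolding Ptot_def by (rule tot_comp1) (rule tot_proj, simp)
  note V = V[unfolded tot_def]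
  have "pr 1 (\<lambda>xs. if (\<forall>f\<in>set [mu (\<lambda>xs. Some (t (hd [xs!1]))), \<lambda>xs. Some (hd xs)]. f xs \<noteq> None)
            then (\<lambda>ys. Some (v (hd [ys!1]))) (map (\<lambda>f. the (f xs)) [mu (\<lambda>xs. Some (t (hd [xs!1]))), \<lambda>xs. Some (hd xs)]) else None)"
    apply (rule pr_comp[OF V])
     apply simp
    apply (simp only: list.set ball_simps)
    using M Ptot_id[unfolded Ptot_def tot_def] by blast
  then show ?thesis unfolding partrec1_pr
  proof (rule pr_cong)
    fix xs :: "nat list" assume "length xs = 1"
    then obtain x where xs: "xs = [x]" using len1 by blast
    show "(if (\<forall>f\<in>set [mu (\<lambda>xs. Some (t (hd [xs!1]))), \<lambda>xs. Some (hd xs)]. f xs \<noteq> None)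
            then (\<lambda>ys. Some (v (hd [ys!1]))) (map (\<lambda>f. the (f xs)) [mu (\<lambda>xs. Some (t (hd [xs!1]))), \<lambda>xs. Some (hd xs)]) else None)
          = (if t (hd xs) = 0 then Some (v (hd xs)) else None)"
      unfolding xs by (auto simp: mu_def)
  qed
qed


datatype prog = Zero | Succ | Proj nat | Comp prog "prog list" | Prec prog prog | Mu prog

definition hdd :: "nat list \<Rightarrow> nat" where "hdd xs = (case xs of [] \<Rightarrow> 0 | x # _ \<Rightarrow> x)"
definition nthd :: "nat \<Rightarrow> nat list \<Rightarrow> nat" where "nthd i xs = (if i < length xs then xs ! i else 0)"

inductive ev :: "prog \<Rightarrow> nat list \<Rightarrow> nat \<Rightarrow> bool"
  and evp :: "prog \<Rightarrow> prog \<Rightarrow> nat \<Rightarrow> nat list \<Rightarrow> nat \<Rightarrow> bool" where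
  evZ: "ev Zero xs 0"
| evS: "ev Succ xs (Suc (hdd xs))"
| evP: "ev (Proj i) xs (nthd i xs)"
| evC: "list_all2 (\<lambda>h r. ev h xs r) hs rs \<Longrightarrow> ev g rs r \<Longrightarrow> ev (Comp g hs) xs r"
| evR: "evp g h (hdd xs) (tl xs) r \<Longrightarrow> ev (Prec g h) xs r"
| evM: "ev g (k # xs) 0 \<Longrightarrow> (\<forall>j<k. \<exists>v. ev g (j # xs) (Suc v)) \<Longrightarrow> ev (Mu g) xs k"
| evp0: "ev g ys r \<Longrightarrow> evp g h 0 ys r"
| evpS: "evp g h k ys r0 \<Longrightarrow> ev h (k # r0 # ys) r \<Longrightarrow> evp g h (Suc k) ys r"

inductive_cases evZE: "ev Zero xs r"
inductive_cases evSE: "ev Succ xs r"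
inductive_cases evPE: "ev (Proj i) xs r"
inductive_cases evCE: "ev (Comp g hs) xs r"
inductive_cases evRE: "ev (Prec g h) xs r"
inductive_cases evME: "ev (Mu g) xs r"
inductive_cases evp0E: "evp g h 0 ys r"
inductive_cases evpSE: "evp g h (Suc k) ys r"

lemma ev_Zero: "ev Zero xs r \<longleftrightarrow> r = 0" by (auto elim: evZE intro: evZ)
lemma ev_Succ: "ev Succ xs r \<longleftrightarrow> r = Suc (hdd xs)" by (auto elim: evSE intro: evS)
lemma ev_Proj: "ev (Proj i) xs r \<longleftrightarrow> r = nthd i xs" by (auto elim: evPE intro: evP)
lemma ev_Comp: "ev (Comp g hs) xs r \<longleftrightarrow> (\<exists>rs. list_all2 (\<lambda>h r. ev h xs r) hs rs \<and> ev g rs r)"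
  by (auto elim: evCE intro: evC)
lemma ev_Prec: "ev (Prec g h) xs r \<longleftrightarrow> evp g h (hdd xs) (tl xs) r" by (auto elim: evRE intro: evR)
lemma ev_Mu: "ev (Mu g) xs k \<longleftrightarrow> ev g (k # xs) 0 \<and> (\<forall>j<k. \<exists>v. ev g (j # xs) (Suc v))"
  by (auto elim: evME intro: evM)
lemma evp_0: "evp g h 0 ys r \<longleftrightarrow> ev g ys r" by (auto elim: evp0E intro: evp0)
lemma evp_Suc: "evp g h (Suc k) ys r \<longleftrightarrow> (\<exists>r0. evp g h k ys r0 \<and> ev h (k # r0 # ys) r)"
  by (auto elim: evpSE intro: evpS)

definition repr :: "nat \<Rightarrow> (nat list \<Rightarrow> nat option) \<Rightarrow> prog \<Rightarrow> bool" where
  "repr n F p \<longleftrightarrow> (\<forall>xs. length xs = n \<longrightarrow> (\<forall>r. F xs = Some r \<longleftrightarrow> ev p xs r))"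

lemma comp_list:
  assumes "list_all2 (\<lambda>h p. repr n h p) gs ps" "length xs = n"
  shows "list_all2 (\<lambda>p r. ev p xs r) ps rs \<longleftrightarrow> (\<forall>h\<in>set gs. h xs \<noteq> None) \<and> rs = map (\<lambda>h. the (h xs)) gs"
  using assms(1)
proof (induction arbitrary: rs rule: list_all2_induct)
  case Nil then show ?case by auto
next
  case (Cons h hs p ps)
  show ?case
  proof (cases rs)
    case Nil then show ?thesis by simp
  next
    case (Cons r rs')
    have "ev p xs r \<longleftrightarrow> h xs = Some r" using Cons.hyps(1) assms(2) unfolding repr_def by simp
    then show ?thesis using Cons.IH[of rs'] Cons by auto
  qed
qed

lemma mu_Some: "mu G xs = Some k \<longleftrightarrow> G (k # xs) = Some 0 \<and> (\<forall>j<k. \<exists>v. G (j # xs) = Some (Suc v))"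
proof
  assume a: "mu G xs = Some k"
  let ?P = "\<lambda>k. G (k # xs) = Some 0 \<and> (\<forall>j<k. G (j # xs) \<noteq> None)"
  have ex: "\<exists>k. ?P k" using a unfolding mu_def by (auto split: if_splits)
  have k: "k = (LEAST k. ?P k)" using a ex unfolding mu_def by auto
  have Pk: "?P k" unfolding k by (rule LeastI_ex[OF ex])
  have "\<exists>v. G (j # xs) = Some (Suc v)" if j: "j < k" for j
  proof -
    have "\<not> ?P j" using not_less_Least[OF j[unfolded k]] .
    moreover have "\<forall>i<j. G (i # xs) \<noteq> None" using Pk j by auto
    moreover have "G (j # xs) \<noteq> None" using Pk j by auto
    ultimately show ?thesis by (metis not0_implies_Suc option.exhaust)
  qed
  then show "G (k # xs) = Some 0 \<and> (\<forall>j<k. \<exists>v. G (j # xs) = Some (Suc v))" using Pk by auto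
next
  assume a: "G (k # xs) = Some 0 \<and> (\<forall>j<k. \<exists>v. G (j # xs) = Some (Suc v))"
  let ?P = "\<lambda>k. G (k # xs) = Some 0 \<and> (\<forall>j<k. G (j # xs) \<noteq> None)"
  have Pk: "?P k" using a by auto
  have "(LEAST k. ?P k) = k"
  proof (rule Least_equality)
    show "?P k" by (rule Pk)
    fix y assume "?P y"
    then show "k \<le> y" using a by (metis not_le nat.distinct(1) option.inject)
  qed
  then show "mu G xs = Some k" using Pk unfolding mu_def by auto
qed

lemma prec_evp:
  assumes "repr n G g" "repr (n+2) H h" "length ys = n"
  shows "prec G H k ys = Some r \<longleftrightarrow> evp g h k ys r"
proof (induction k arbitrary: r)
  case 0 then show ?case using assms unfolding repr_def by (simp add: evp_0)
next
  case (Suc k)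
  have "prec G H (Suc k) ys = Some r \<longleftrightarrow> (\<exists>r0. prec G H k ys = Some r0 \<and> H (k # r0 # ys) = Some r)"
    by (auto split: option.splits)
  also have "\<dots> \<longleftrightarrow> (\<exists>r0. evp g h k ys r0 \<and> ev h (k # r0 # ys) r)"
    using Suc.IH assms(2,3) unfolding repr_def by simp
  finally show ?case by (simp add: evp_Suc)
qed

lemma precfn_prog: "precfn n F \<Longrightarrow> \<exists>p. repr n F p"
proof (induction rule: precfn.induct)
  case (zero n) then show ?case by (auto simp: repr_def ev_Zero intro!: exI[of _ Zero])
next
  case succ
  show ?case
    by (rule exI[of _ Succ]) (auto simp: repr_def ev_Succ hdd_def length_Suc_conv)
next
  case (proj i n) then show ?case by (auto simp: repr_def ev_Proj nthd_def intro!: exI[of _ "Proj i"])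
next
  case (comp m g gs n)
  obtain pg where pg: "repr m g pg" using comp.IH(1) by blast
  have "\<forall>h\<in>set gs. \<exists>p. repr n h p" using comp.IH(2) by blast
  from list_choice[OF this] obtain ps where ps: "list_all2 (\<lambda>h p. repr n h p) gs ps" by (elim exE)
  show ?case
  proof (rule exI[of _ "Comp pg ps"], unfold repr_def, intro allI impI)
    fix xs :: "nat list" and r assume l: "length xs = n"
    note cl = comp_list[OF ps l]
    have lm: "length (map (\<lambda>h. the (h xs)) gs) = m" using comp.hyps(2) by simp
    show "(if \<forall>h\<in>set gs. h xs \<noteq> None then g (map (\<lambda>h. the (h xs)) gs) else None) = Some r \<longleftrightarrow>
          ev (Comp pg ps) xs r"
      unfolding ev_Comp cl using pg lm unfolding repr_def by auto
  qed
next
  case (prim_rec n g h)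
  obtain pg where pg: "repr n g pg" using prim_rec.IH(1) by blast
  obtain ph where ph: "repr (n+2) h ph" using prim_rec.IH(2) by blast
  show ?case
  proof (rule exI[of _ "Prec pg ph"], unfold repr_def, intro allI impI)
    fix xs :: "nat list" and r assume l: "length xs = Suc n"
    then have "hd xs = hdd xs" "length (tl xs) = n" by (auto simp: hdd_def length_Suc_conv)
    then show "prec g h (hd xs) (tl xs) = Some r \<longleftrightarrow> ev (Prec pg ph) xs r"
      using prec_evp[OF pg ph] by (simp add: ev_Prec)
  qed
next
  case (minim n g)
  obtain pg where pg: "repr (Suc n) g pg" using minim.IH by blast
  show ?case
  proof (rule exI[of _ "Mu pg"], unfold repr_def, intro allI impI)
    fix xs :: "nat list" and r assume l: "length xs = n"
    have e: "\<And>k v. g (k # xs) = Some v \<longleftrightarrow> ev pg (k # xs) v" using pg l unfolding repr_def by simp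
    show "mu g xs = Some r \<longleftrightarrow> ev (Mu pg) xs r"
      unfolding mu_Some ev_Mu e ..
  qed
qed


datatype frame = FC prog "prog list" "nat list" "nat list" | FP prog nat nat "nat list" | FM prog nat "nat list"
datatype state = Ev prog "nat list" "frame list" | Rt nat "frame list"

fun step :: "state \<Rightarrow> state" where
  "step (Ev Zero xs K) = Rt 0 K"
| "step (Ev Succ xs K) = Rt (Suc (hdd xs)) K"
| "step (Ev (Proj i) xs K) = Rt (nthd i xs) K"
| "step (Ev (Comp g []) xs K) = Ev g [] K"
| "step (Ev (Comp g (h # hs)) xs K) = Ev h xs (FC g hs xs [] # K)"
| "step (Ev (Prec g h) xs K) = Ev g (tl xs) (FP h 0 (hdd xs) (tl xs) # K)"
| "step (Ev (Mu g) xs K) = Ev g (0 # xs) (FM g 0 xs # K)"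
| "step (Rt r []) = Rt r []"
| "step (Rt r (FC g [] xs acc # K)) = Ev g (rev (r # acc)) K"
| "step (Rt r (FC g (h # hs) xs acc # K)) = Ev h xs (FC g hs xs (r # acc) # K)"
| "step (Rt r (FP h k n ys # K)) = (if k = n then Rt r K else Ev h (k # r # ys) (FP h (Suc k) n ys # K))"
| "step (Rt r (FM g k xs # K)) = (if r = 0 then Rt k K else Ev g (Suc k # xs) (FM g (Suc k) xs # K))"

definition reach :: "state \<Rightarrow> state \<Rightarrow> bool" where
  "reach s t \<longleftrightarrow> (\<exists>n. (step ^^ n) s = t)"

lemma reach_refl: "reach s s" unfolding reach_def by (rule exI[of _ 0]) simp
lemma reach_step: "reach (step s) t \<Longrightarrow> reach s t"
proof -
  assume "reach (step s) t"
  then obtain n where "(step ^^ n) (step s) = t" unfolding reach_def by blast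
  then have "(step ^^ Suc n) s = t" by (simp add: funpow_Suc_right del: funpow.simps)
  then show ?thesis unfolding reach_def by blast
qed
lemma reach_trans: "reach s t \<Longrightarrow> reach t u \<Longrightarrow> reach s u"
proof -
  assume "reach s t" "reach t u"
  then obtain n m where "(step ^^ n) s = t" "(step ^^ m) t = u" unfolding reach_def by blast
  then have "(step ^^ (m + n)) s = u" by (simp add: funpow_add)
  then show ?thesis unfolding reach_def by blast
qed

lemma comp_loop:
  assumes "list_all2 (\<lambda>h r. \<forall>K. reach (Ev h xs K) (Rt r K)) hs rs"
  shows "reach (Rt r0 (FC g hs xs acc # K)) (Ev g (rev acc @ r0 # rs) K)"
  using assms
proof (induction arbitrary: r0 acc rule: list_all2_induct)
  case Nil then show ?case by (rule reach_step) (simp add: reach_refl)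
next
  case (Cons h hs r rs)
  show ?case
    apply (rule reach_step)
    apply simp
    apply (rule reach_trans[OF Cons.hyps(1)[rule_format]])
    using Cons.IH[of r "r0 # acc"] by simp
qed

lemma mu_loop:
  assumes "\<forall>j<k. \<exists>v. \<forall>K. reach (Ev g (j # xs) K) (Rt (Suc v) K)"
  shows "j \<le> k \<Longrightarrow> reach (Ev g (0 # xs) (FM g 0 xs # K)) (Ev g (j # xs) (FM g j xs # K))"
proof (induction j)
  case 0 show ?case by (rule reach_refl)
next
  case (Suc j)
  then have "j < k" by simp
  then obtain v where v: "\<forall>K. reach (Ev g (j # xs) K) (Rt (Suc v) K)" using assms by blast
  have "reach (Ev g (j # xs) (FM g j xs # K)) (Ev g (Suc j # xs) (FM g (Suc j) xs # K))"
    by (rule reach_trans[OF v[rule_format]], rule reach_step) (simp add: reach_refl)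
  then show ?case using Suc by (meson Suc_leD reach_trans)
qed

lemma complete:
  "ev p xs r \<Longrightarrow> \<forall>K. reach (Ev p xs K) (Rt r K)"
  "evp g h k ys r \<Longrightarrow> \<forall>n K. k \<le> n \<longrightarrow> reach (Ev g ys (FP h 0 n ys # K)) (Rt r (FP h k n ys # K))"
proof (induction rule: ev_evp.inducts)
  case (evZ xs) then show ?case by (intro allI, rule reach_step) (simp add: reach_refl)
next
  case (evS xs) then show ?case by (intro allI, rule reach_step) (simp add: reach_refl)
next
  case (evP i xs) then show ?case by (intro allI, rule reach_step) (simp add: reach_refl)
next
  case (evC xs hs rs g r)
  have l: "list_all2 (\<lambda>h r. \<forall>K. reach (Ev h xs K) (Rt r K)) hs rs"
    using evC.IH(1) by (rule list_all2_mono) simp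
  show ?case
  proof (cases hs)
    case Nil
    then have "rs = []" using l by simp
    show ?thesis
    proof
      fix K show "reach (Ev (Comp g hs) xs K) (Rt r K)"
        unfolding Nil by (rule reach_step) (use evC.IH(2) \<open>rs = []\<close> in simp)
    qed
  next
    case (Cons h hs')
    then obtain r1 rs' where rs: "rs = r1 # rs'" "\<forall>K. reach (Ev h xs K) (Rt r1 K)"
      "list_all2 (\<lambda>h r. \<forall>K. reach (Ev h xs K) (Rt r K)) hs' rs'"
      using l by (auto simp: list_all2_Cons1)
    show ?thesis
    proof
      fix K
      show "reach (Ev (Comp g hs) xs K) (Rt r K)"
        unfolding Cons
        apply (rule reach_step, simp)
        apply (rule reach_trans[OF rs(2)[rule_format]])
        apply (rule reach_trans[OF comp_loop[OF rs(3)]])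
        using evC.IH(2) rs(1) by simp
    qed
  qed
next
  case (evR g h xs r)
  show ?case
  proof
    fix K
    show "reach (Ev (Prec g h) xs K) (Rt r K)"
      apply (rule reach_step, simp)
      apply (rule reach_trans[OF evR.IH[rule_format, of "hdd xs"]], simp)
      by (rule reach_step) (simp add: reach_refl)
  qed
next
  case (evM g k xs)
  have a: "\<forall>j<k. \<exists>v. \<forall>K. reach (Ev g (j # xs) K) (Rt (Suc v) K)" using evM.IH(2) by blast
  show ?case
  proof
    fix K
    show "reach (Ev (Mu g) xs K) (Rt k K)"
      apply (rule reach_step, simp)
      apply (rule reach_trans[OF mu_loop[OF a, of k, simplified]])
      apply (rule reach_trans[OF evM.IH(1)[rule_format]])
      by (rule reach_step) (simp add: reach_refl)
  qed
next
  case (evp0 g ys r h) then show ?case by blast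
next
  case (evpS g h k ys r0 r)
  show ?case
  proof (intro allI impI)
    fix n K assume "Suc k \<le> n"
    then have kn: "k \<le> n" "k \<noteq> n" by auto
    show "reach (Ev g ys (FP h 0 n ys # K)) (Rt r (FP h (Suc k) n ys # K))"
      apply (rule reach_trans[OF evpS.IH(1)[rule_format, OF kn(1)]])
      apply (rule reach_step)
      using kn(2) evpS.IH(2) by simp
  qed
qed


lemma fp_Suc: "(step ^^ Suc n) s = (step ^^ n) (step s)"
  by (simp add: funpow_Suc_right del: funpow.simps)

lemma fp_rest: "m \<le> n \<Longrightarrow> (step ^^ m) s = t \<Longrightarrow> (step ^^ n) s = (step ^^ (n - m)) t"
proof -
  assume "m \<le> n" "(step ^^ m) s = t"
  then have "n = (n - m) + m" by simp
  then have "(step ^^ n) s = (step ^^ (n - m)) ((step ^^ m) s)" by (metis funpow_add o_apply)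
  then show ?thesis using \<open>(step ^^ m) s = t\<close> by simp
qed

definition S1 :: "nat \<Rightarrow> bool" where
  "S1 n \<longleftrightarrow> (\<forall>p xs K r'. (step ^^ n) (Ev p xs K) = Rt r' [] \<longrightarrow>
      (\<exists>r m. m \<le> n \<and> ev p xs r \<and> (step ^^ m) (Ev p xs K) = Rt r K))"
definition S2 :: "nat \<Rightarrow> bool" where
  "S2 n \<longleftrightarrow> (\<forall>g hs xs acc r0 K r'. (step ^^ n) (Rt r0 (FC g hs xs acc # K)) = Rt r' [] \<longrightarrow>
      (\<exists>rs r m. m \<le> n \<and> list_all2 (\<lambda>h r. ev h xs r) hs rs \<and> ev g (rev acc @ r0 # rs) r \<and>
         (step ^^ m) (Rt r0 (FC g hs xs acc # K)) = Rt r K))"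
definition S3 :: "nat \<Rightarrow> bool" where
  "S3 n \<longleftrightarrow> (\<forall>g h k N ys r0 K r'. evp g h k ys r0 \<longrightarrow> k \<le> N \<longrightarrow>
      (step ^^ n) (Rt r0 (FP h k N ys # K)) = Rt r' [] \<longrightarrow>
      (\<exists>r m. m \<le> n \<and> evp g h N ys r \<and> (step ^^ m) (Rt r0 (FP h k N ys # K)) = Rt r K))"
definition S4 :: "nat \<Rightarrow> bool" where
  "S4 n \<longleftrightarrow> (\<forall>g k xs v K r'. (\<forall>j<k. \<exists>v. ev g (j # xs) (Suc v)) \<longrightarrow> ev g (k # xs) v \<longrightarrow>
      (step ^^ n) (Rt v (FM g k xs # K)) = Rt r' [] \<longrightarrow>
      (\<exists>r m. m \<le> n \<and> ev (Mu g) xs r \<and> (step ^^ m) (Rt v (FM g k xs # K)) = Rt r K))"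

lemma sound_all: "S1 n \<and> S2 n \<and> S3 n \<and> S4 n"
proof (induction n rule: less_induct)
  case (less n)
  have I1: "\<And>m p xs K r'. m < n \<Longrightarrow> (step ^^ m) (Ev p xs K) = Rt r' [] \<Longrightarrow>
      \<exists>r m'. m' \<le> m \<and> ev p xs r \<and> (step ^^ m') (Ev p xs K) = Rt r K"
    using less unfolding S1_def by blast
  have I2: "\<And>m g hs xs acc r0 K r'. m < n \<Longrightarrow> (step ^^ m) (Rt r0 (FC g hs xs acc # K)) = Rt r' [] \<Longrightarrow>
      \<exists>rs r m'. m' \<le> m \<and> list_all2 (\<lambda>h r. ev h xs r) hs rs \<and> ev g (rev acc @ r0 # rs) r \<and>
         (step ^^ m') (Rt r0 (FC g hs xs acc # K)) = Rt r K"
    using less unfolding S2_def by blast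
  have I3: "\<And>m g h k N ys r0 K r'. m < n \<Longrightarrow> evp g h k ys r0 \<Longrightarrow> k \<le> N \<Longrightarrow>
      (step ^^ m) (Rt r0 (FP h k N ys # K)) = Rt r' [] \<Longrightarrow>
      \<exists>r m'. m' \<le> m \<and> evp g h N ys r \<and> (step ^^ m') (Rt r0 (FP h k N ys # K)) = Rt r K"
    using less unfolding S3_def by blast
  have I4: "\<And>m g k xs v K r'. m < n \<Longrightarrow> (\<forall>j<k. \<exists>v. ev g (j # xs) (Suc v)) \<Longrightarrow> ev g (k # xs) v \<Longrightarrow>
      (step ^^ m) (Rt v (FM g k xs # K)) = Rt r' [] \<Longrightarrow>
      \<exists>r m'. m' \<le> m \<and> ev (Mu g) xs r \<and> (step ^^ m') (Rt v (FM g k xs # K)) = Rt r K"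
    using less unfolding S4_def by blast
  show ?case
  proof (intro conjI)
    show "S1 n" unfolding S1_def
    proof (intro allI impI)
      fix p xs K r' assume H: "(step ^^ n) (Ev p xs K) = Rt r' []"
      obtain n1 where n: "n = Suc n1" using H by (cases n) auto
      have H1: "(step ^^ n1) (step (Ev p xs K)) = Rt r' []" using H n fp_Suc by simp
      show "\<exists>r m. m \<le> n \<and> ev p xs r \<and> (step ^^ m) (Ev p xs K) = Rt r K"
      proof (cases p)
        case Zero then show ?thesis using n by (intro exI[of _ 0] exI[of _ 1]) (auto simp: ev_Zero)
      next
        case Succ then show ?thesis using n by (intro exI[of _ "Suc (hdd xs)"] exI[of _ 1]) (auto simp: ev_Succ)
      next
        case (Proj i) then show ?thesis using n by (intro exI[of _ "nthd i xs"] exI[of _ 1]) (auto simp: ev_Proj)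
      next
        case (Comp g hs)
        show ?thesis
        proof (cases hs)
          case Nil
          have "(step ^^ n1) (Ev g [] K) = Rt r' []" using H1 Comp Nil by simp
          then obtain r m where r: "m \<le> n1" "ev g [] r" "(step ^^ m) (Ev g [] K) = Rt r K"
            using I1[of n1] n by blast
          show ?thesis
          proof (intro exI conjI)
            show "Suc m \<le> n" using r n by simp
            show "ev p xs r" unfolding Comp Nil ev_Comp using r by auto
            show "(step ^^ Suc m) (Ev p xs K) = Rt r K" unfolding fp_Suc using r Comp Nil by simp
          qed
        next
          case (Cons h hs')
          have "(step ^^ n1) (Ev h xs (FC g hs' xs [] # K)) = Rt r' []" using H1 Comp Cons by simp
          then obtain r1 m1 where r1: "m1 \<le> n1" "ev h xs r1" "(step ^^ m1) (Ev h xs (FC g hs' xs [] # K)) = Rt r1 (FC g hs' xs [] # K)"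
            using I1[of n1] n by blast
          have "(step ^^ (n1 - m1)) (Rt r1 (FC g hs' xs [] # K)) = Rt r' []"
            using fp_rest[OF r1(1) r1(3)] \<open>(step ^^ n1) (Ev h xs (FC g hs' xs [] # K)) = Rt r' []\<close> by simp
          then obtain rs r m2 where r2: "m2 \<le> n1 - m1" "list_all2 (\<lambda>h r. ev h xs r) hs' rs"
            "ev g (rev [] @ r1 # rs) r" "(step ^^ m2) (Rt r1 (FC g hs' xs [] # K)) = Rt r K"
            using I2[of "n1 - m1"] n lessI diff_le_self le_imp_less_Suc by blast
          show ?thesis
          proof (intro exI conjI)
            show "Suc (m2 + m1) \<le> n" using r1 r2 n by simp
            show "ev p xs r" unfolding Comp Cons ev_Comp using r1 r2 by auto
            show "(step ^^ Suc (m2 + m1)) (Ev p xs K) = Rt r K"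
              unfolding fp_Suc funpow_add using r1 r2 Comp Cons by simp
          qed
        qed
      next
        case (Prec g h)
        have "(step ^^ n1) (Ev g (tl xs) (FP h 0 (hdd xs) (tl xs) # K)) = Rt r' []" using H1 Prec by simp
        then obtain r0 m1 where r1: "m1 \<le> n1" "ev g (tl xs) r0"
            "(step ^^ m1) (Ev g (tl xs) (FP h 0 (hdd xs) (tl xs) # K)) = Rt r0 (FP h 0 (hdd xs) (tl xs) # K)"
          using I1[of n1] n by blast
        have "(step ^^ (n1 - m1)) (Rt r0 (FP h 0 (hdd xs) (tl xs) # K)) = Rt r' []"
          using fp_rest[OF r1(1) r1(3)] \<open>(step ^^ n1) (Ev g (tl xs) _) = Rt r' []\<close> by simp
        moreover have "evp g h 0 (tl xs) r0" using r1(2) by (simp add: evp_0)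
        ultimately obtain r m2 where r2: "m2 \<le> n1 - m1" "evp g h (hdd xs) (tl xs) r"
            "(step ^^ m2) (Rt r0 (FP h 0 (hdd xs) (tl xs) # K)) = Rt r K"
          using I3[of "n1 - m1"] n lessI diff_le_self le_imp_less_Suc by blast
        show ?thesis
        proof (intro exI conjI)
          show "Suc (m2 + m1) \<le> n" using r1 r2 n by simp
          show "ev p xs r" unfolding Prec ev_Prec using r2 by auto
          show "(step ^^ Suc (m2 + m1)) (Ev p xs K) = Rt r K"
            unfolding fp_Suc funpow_add using r1 r2 Prec by simp
        qed
      next
        case (Mu g)
        have "(step ^^ n1) (Ev g (0 # xs) (FM g 0 xs # K)) = Rt r' []" using H1 Mu by simp
        then obtain v m1 where r1: "m1 \<le> n1" "ev g (0 # xs) v"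
            "(step ^^ m1) (Ev g (0 # xs) (FM g 0 xs # K)) = Rt v (FM g 0 xs # K)"
          using I1[of n1] n by blast
        have "(step ^^ (n1 - m1)) (Rt v (FM g 0 xs # K)) = Rt r' []"
          using fp_rest[OF r1(1) r1(3)] \<open>(step ^^ n1) (Ev g (0 # xs) _) = Rt r' []\<close> by simp
        then obtain r m2 where r2: "m2 \<le> n1 - m1" "ev (Mu g) xs r"
            "(step ^^ m2) (Rt v (FM g 0 xs # K)) = Rt r K"
          using I4[of "n1 - m1" 0 g xs v] n r1(2) lessI diff_le_self le_imp_less_Suc by blast
        show ?thesis
        proof (intro exI conjI)
          show "Suc (m2 + m1) \<le> n" using r1 r2 n by simp
          show "ev p xs r" unfolding Mu using r2 by auto
          show "(step ^^ Suc (m2 + m1)) (Ev p xs K) = Rt r K"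
            unfolding fp_Suc funpow_add using r1 r2 Mu by simp
        qed
      qed
    qed
  next
    show "S2 n" unfolding S2_def
    proof (intro allI impI)
      fix g hs xs acc r0 K r' assume H: "(step ^^ n) (Rt r0 (FC g hs xs acc # K)) = Rt r' []"
      obtain n1 where n: "n = Suc n1" using H by (cases n) auto
      have H1: "(step ^^ n1) (step (Rt r0 (FC g hs xs acc # K))) = Rt r' []" using H n fp_Suc by simp
      show "\<exists>rs r m. m \<le> n \<and> list_all2 (\<lambda>h r. ev h xs r) hs rs \<and> ev g (rev acc @ r0 # rs) r \<and>
         (step ^^ m) (Rt r0 (FC g hs xs acc # K)) = Rt r K"
      proof (cases hs)
        case Nil
        have "(step ^^ n1) (Ev g (rev (r0 # acc)) K) = Rt r' []" using H1 Nil by simp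
        then obtain r m where r: "m \<le> n1" "ev g (rev (r0 # acc)) r" "(step ^^ m) (Ev g (rev (r0 # acc)) K) = Rt r K"
          using I1[of n1] n by blast
        show ?thesis
        proof (intro exI conjI)
          show "Suc m \<le> n" using r n by simp
          show "list_all2 (\<lambda>h r. ev h xs r) hs []" using Nil by simp
          show "ev g (rev acc @ [r0]) r" using r by simp
          show "(step ^^ Suc m) (Rt r0 (FC g hs xs acc # K)) = Rt r K" unfolding fp_Suc using r Nil by simp
        qed
      next
        case (Cons h hs')
        have "(step ^^ n1) (Ev h xs (FC g hs' xs (r0 # acc) # K)) = Rt r' []" using H1 Cons by simp
        then obtain r1 m1 where r1: "m1 \<le> n1" "ev h xs r1"
            "(step ^^ m1) (Ev h xs (FC g hs' xs (r0 # acc) # K)) = Rt r1 (FC g hs' xs (r0 # acc) # K)"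
          using I1[of n1] n by blast
        have "(step ^^ (n1 - m1)) (Rt r1 (FC g hs' xs (r0 # acc) # K)) = Rt r' []"
          using fp_rest[OF r1(1) r1(3)] \<open>(step ^^ n1) (Ev h xs _) = Rt r' []\<close> by simp
        then obtain rs r m2 where r2: "m2 \<le> n1 - m1" "list_all2 (\<lambda>h r. ev h xs r) hs' rs"
            "ev g (rev (r0 # acc) @ r1 # rs) r" "(step ^^ m2) (Rt r1 (FC g hs' xs (r0 # acc) # K)) = Rt r K"
          using I2[of "n1 - m1"] n lessI diff_le_self le_imp_less_Suc by blast
        show ?thesis
        proof (intro exI conjI)
          show "Suc (m2 + m1) \<le> n" using r1 r2 n by simp
          show "list_all2 (\<lambda>h r. ev h xs r) hs (r1 # rs)" using Cons r1 r2 by simp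
          show "ev g (rev acc @ r0 # r1 # rs) r" using r2 by simp
          show "(step ^^ Suc (m2 + m1)) (Rt r0 (FC g hs xs acc # K)) = Rt r K"
            unfolding fp_Suc funpow_add using r1 r2 Cons by simp
        qed
      qed
    qed
  next
    show "S3 n" unfolding S3_def
    proof (intro allI impI)
      fix g h k N ys r0 K r' assume e: "evp g h k ys r0" and kN: "k \<le> N"
        and H: "(step ^^ n) (Rt r0 (FP h k N ys # K)) = Rt r' []"
      obtain n1 where n: "n = Suc n1" using H by (cases n) auto
      have H1: "(step ^^ n1) (step (Rt r0 (FP h k N ys # K))) = Rt r' []" using H n fp_Suc by simp
      show "\<exists>r m. m \<le> n \<and> evp g h N ys r \<and> (step ^^ m) (Rt r0 (FP h k N ys # K)) = Rt r K"
      proof (cases "k = N")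
        case True
        then show ?thesis using e n by (intro exI[of _ r0] exI[of _ 1]) auto
      next
        case False
        have "(step ^^ n1) (Ev h (k # r0 # ys) (FP h (Suc k) N ys # K)) = Rt r' []" using H1 False by simp
        then obtain r1 m1 where r1: "m1 \<le> n1" "ev h (k # r0 # ys) r1"
            "(step ^^ m1) (Ev h (k # r0 # ys) (FP h (Suc k) N ys # K)) = Rt r1 (FP h (Suc k) N ys # K)"
          using I1[of n1] n by blast
        have "(step ^^ (n1 - m1)) (Rt r1 (FP h (Suc k) N ys # K)) = Rt r' []"
          using fp_rest[OF r1(1) r1(3)] \<open>(step ^^ n1) (Ev h _ _) = Rt r' []\<close> by simp
        moreover have "evp g h (Suc k) ys r1" using e r1(2) by (auto simp: evp_Suc)
        moreover have "Suc k \<le> N" using kN False by simp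
        ultimately obtain r m2 where r2: "m2 \<le> n1 - m1" "evp g h N ys r"
            "(step ^^ m2) (Rt r1 (FP h (Suc k) N ys # K)) = Rt r K"
          using I3[of "n1 - m1"] n lessI diff_le_self le_imp_less_Suc by blast
        show ?thesis
        proof (intro exI conjI)
          show "Suc (m2 + m1) \<le> n" using r1 r2 n by simp
          show "evp g h N ys r" using r2 by simp
          show "(step ^^ Suc (m2 + m1)) (Rt r0 (FP h k N ys # K)) = Rt r K"
            unfolding fp_Suc funpow_add using r1 r2 False by simp
        qed
      qed
    qed
  next
    show "S4 n" unfolding S4_def
    proof (intro allI impI)
      fix g k xs v K r' assume bel: "\<forall>j<k. \<exists>v. ev g (j # xs) (Suc v)" and e: "ev g (k # xs) v"
        and H: "(step ^^ n) (Rt v (FM g k xs # K)) = Rt r' []"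
      obtain n1 where n: "n = Suc n1" using H by (cases n) auto
      have H1: "(step ^^ n1) (step (Rt v (FM g k xs # K))) = Rt r' []" using H n fp_Suc by simp
      show "\<exists>r m. m \<le> n \<and> ev (Mu g) xs r \<and> (step ^^ m) (Rt v (FM g k xs # K)) = Rt r K"
      proof (cases "v = 0")
        case True
        then show ?thesis using e bel n by (intro exI[of _ k] exI[of _ 1]) (auto simp: ev_Mu)
      next
        case False
        have "(step ^^ n1) (Ev g (Suc k # xs) (FM g (Suc k) xs # K)) = Rt r' []" using H1 False by simp
        then obtain v1 m1 where r1: "m1 \<le> n1" "ev g (Suc k # xs) v1"
            "(step ^^ m1) (Ev g (Suc k # xs) (FM g (Suc k) xs # K)) = Rt v1 (FM g (Suc k) xs # K)"
          using I1[of n1] n by blast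
        have "(step ^^ (n1 - m1)) (Rt v1 (FM g (Suc k) xs # K)) = Rt r' []"
          using fp_rest[OF r1(1) r1(3)] \<open>(step ^^ n1) (Ev g _ _) = Rt r' []\<close> by simp
        moreover have "\<forall>j<Suc k. \<exists>v. ev g (j # xs) (Suc v)"
          using bel e False by (metis less_Suc_eq not0_implies_Suc)
        ultimately obtain r m2 where r2: "m2 \<le> n1 - m1" "ev (Mu g) xs r"
            "(step ^^ m2) (Rt v1 (FM g (Suc k) xs # K)) = Rt r K"
          using I4[of "n1 - m1" "Suc k" g xs v1] n r1(2) lessI diff_le_self le_imp_less_Suc by blast
        show ?thesis
        proof (intro exI conjI)
          show "Suc (m2 + m1) \<le> n" using r1 r2 n by simp
          show "ev (Mu g) xs r" using r2 by simp
          show "(step ^^ Suc (m2 + m1)) (Rt v (FM g k xs # K)) = Rt r K"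
            unfolding fp_Suc funpow_add using r1 r2 False by simp
        qed
      qed
    qed
  qed
qed

lemma halt_fix: "(step ^^ k) (Rt r []) = Rt r []"
  by (induction k) auto

lemma machine_iff: "ev p xs r \<longleftrightarrow> (\<exists>n. (step ^^ n) (Ev p xs []) = Rt r [])"
proof
  assume "ev p xs r"
  then show "\<exists>n. (step ^^ n) (Ev p xs []) = Rt r []" using complete(1) unfolding reach_def by blast
next
  assume "\<exists>n. (step ^^ n) (Ev p xs []) = Rt r []"
  then obtain n where H: "(step ^^ n) (Ev p xs []) = Rt r []" by blast
  then obtain r0 m where m: "m \<le> n" "ev p xs r0" "(step ^^ m) (Ev p xs []) = Rt r0 []"
    using sound_all[of n] unfolding S1_def by blast
  have "(step ^^ n) (Ev p xs []) = Rt r0 []" using fp_rest[OF m(1) m(3)] halt_fix by simp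
  then show "ev p xs r" using H m(2) by simp
qed


definition consN :: "nat \<Rightarrow> nat \<Rightarrow> nat" where "consN h t = Suc (pN h t)"
definition headN :: "nat \<Rightarrow> nat" where "headN L = fN (L - 1)"
definition tailN :: "nat \<Rightarrow> nat" where "tailN L = sN (L - 1)"

lemma consN_nz[simp]: "consN a b \<noteq> 0" unfolding consN_def by simp
lemma headN_consN[simp]: "headN (consN a b) = a" unfolding consN_def headN_def by simp
lemma tailN_consN[simp]: "tailN (consN a b) = b" unfolding consN_def tailN_def by simp
lemma pN00: "pN 0 0 = 0" unfolding pN_def prod_encode_def by simp
lemma headN_0[simp]: "headN 0 = 0" unfolding headN_def fN_def
  by (metis diff_0_eq_0 fst_conv pN00 pN_def prod_encode_inverse)
lemma tailN_0[simp]: "tailN 0 = 0" unfolding tailN_def sN_def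
  by (metis diff_0_eq_0 snd_conv pN00 pN_def prod_encode_inverse)

lemma le_Cons[simp]: "list_encode (x # xs) = consN x (list_encode xs)"
  unfolding consN_def pN_def by simp
declare list_encode.simps(2)[simp del]

lemma le_eq_0[simp]: "list_encode xs = 0 \<longleftrightarrow> xs = []"
  by (cases xs) auto

lemma headN_le[simp]: "headN (list_encode xs) = hdd xs"
  by (cases xs) (auto simp: hdd_def)
lemma tailN_le[simp]: "tailN (list_encode xs) = list_encode (tl xs)"
  by (cases xs) auto

definition nthN :: "nat \<Rightarrow> nat \<Rightarrow> nat" where "nthN i L = headN ((tailN ^^ i) L)"

lemma nthN_le[simp]: "nthN i (list_encode xs) = nthd i xs"
proof (induction i arbitrary: xs)
  case 0 then show ?case by (cases xs) (auto simp: nthN_def nthd_def hdd_def)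
next
  case (Suc i)
  have "nthN (Suc i) (list_encode xs) = nthN i (list_encode (tl xs))"
    unfolding nthN_def by (simp add: funpow_Suc_right del: funpow.simps)
  also have "\<dots> = nthd i (tl xs)" by (rule Suc.IH)
  also have "\<dots> = nthd (Suc i) xs" by (cases xs) (auto simp: nthd_def)
  finally show ?case .
qed

definition revstep :: "nat \<Rightarrow> nat" where
  "revstep p = (if fN p = 0 then p else pN (tailN (fN p)) (consN (headN (fN p)) (sN p)))"
definition revN :: "nat \<Rightarrow> nat" where "revN L = sN ((revstep ^^ L) (pN L 0))"

lemma len_le: "length xs \<le> list_encode xs"
proof (induction xs)
  case Nil then show ?case by simp
next
  case (Cons x xs)
  have "list_encode xs \<le> pN x (list_encode xs)" unfolding pN_def by (rule le_prod_encode_2)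
  then show ?case using Cons by (simp add: consN_def)
qed

lemma revstep_fix: "(revstep ^^ k) (pN 0 b) = pN 0 b"
  by (induction k) (auto simp: revstep_def)

lemma revstep_iter: "length xs \<le> k \<Longrightarrow> (revstep ^^ k) (pN (list_encode xs) (list_encode ys)) = pN 0 (list_encode (rev xs @ ys))"
proof (induction xs arbitrary: k ys)
  case Nil then show ?case using revstep_fix by (simp add: pN00)
next
  case (Cons x xs)
  obtain k' where k: "k = Suc k'" using Cons.prems by (cases k) auto
  have "revstep (pN (list_encode (x # xs)) (list_encode ys)) = pN (list_encode xs) (list_encode (x # ys))"
    by (simp add: revstep_def)
  then have "(revstep ^^ k) (pN (list_encode (x # xs)) (list_encode ys)) =
             (revstep ^^ k') (pN (list_encode xs) (list_encode (x # ys)))"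
    unfolding k by (simp add: funpow_Suc_right del: funpow.simps)
  also have "\<dots> = pN 0 (list_encode (rev xs @ x # ys))" using Cons.IH[of k' "x # ys"] Cons.prems k by simp
  finally show ?case by simp
qed

lemma revN_le[simp]: "revN (list_encode xs) = list_encode (rev xs)"
  unfolding revN_def using revstep_iter[OF len_le, of xs "[]"] by simp

lemma revN_consN[simp]: "revN (consN r (list_encode acc)) = list_encode (rev acc @ [r])"
  using revN_le[of "r # acc"] by simp

lemma Ptot_consN[intro]: "Ptot f \<Longrightarrow> Ptot g \<Longrightarrow> Ptot (\<lambda>x. consN (f x) (g x))"
  unfolding consN_def by (intro Ptot_Suc Ptot_pN)
lemma Ptot_headN[intro]: "Ptot f \<Longrightarrow> Ptot (\<lambda>x. headN (f x))"
  unfolding headN_def by (intro Ptot_fN Ptot_sub Ptot_const)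
lemma Ptot_tailN[intro]: "Ptot f \<Longrightarrow> Ptot (\<lambda>x. tailN (f x))"
  unfolding tailN_def by (intro Ptot_sN Ptot_sub Ptot_const)
lemma Ptot_tailN0: "Ptot tailN" using Ptot_tailN[OF Ptot_id] by simp
lemma Ptot_nthN[intro]: "Ptot f \<Longrightarrow> Ptot g \<Longrightarrow> Ptot (\<lambda>x. nthN (f x) (g x))"
  unfolding nthN_def by (intro Ptot_headN Ptot_iter Ptot_tailN0)
lemma Ptot_revstep: "Ptot revstep"
  unfolding revstep_def by (intro Ptot_if Ptot_fN Ptot_id Ptot_const Ptot_pN Ptot_tailN Ptot_consN Ptot_headN Ptot_sN)
lemma Ptot_revN[intro]: "Ptot f \<Longrightarrow> Ptot (\<lambda>x. revN (f x))"
  unfolding revN_def by (intro Ptot_sN Ptot_iter Ptot_revstep Ptot_pN Ptot_const)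


fun encp :: "prog \<Rightarrow> nat" where
  "encp Zero = pN 0 0"
| "encp Succ = pN 1 0"
| "encp (Proj i) = pN 2 i"
| "encp (Comp g hs) = pN 3 (pN (encp g) (list_encode (map encp hs)))"
| "encp (Prec g h) = pN 4 (pN (encp g) (encp h))"
| "encp (Mu g) = pN 5 (encp g)"

fun encF :: "frame \<Rightarrow> nat" where
  "encF (FC g hs xs acc) = pN 0 (pN (encp g) (pN (list_encode (map encp hs)) (pN (list_encode xs) (list_encode acc))))"
| "encF (FP h k n ys) = pN 1 (pN (encp h) (pN k (pN n (list_encode ys))))"
| "encF (FM g k xs) = pN 2 (pN (encp g) (pN k (list_encode xs)))"

fun encS :: "state \<Rightarrow> nat" where
  "encS (Ev p xs K) = pN 0 (pN (encp p) (pN (list_encode xs) (list_encode (map encF K))))"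
| "encS (Rt r K) = pN 1 (pN r (list_encode (map encF K)))"

definition evN :: "nat \<Rightarrow> nat" where
  "evN q = (if fN (fN q) = 0 then pN 1 (pN 0 (sN (sN q)))
    else if fN (fN q) = 1 then pN 1 (pN (Suc (headN (fN (sN q)))) (sN (sN q)))
    else if fN (fN q) = 2 then pN 1 (pN (nthN (sN (fN q)) (fN (sN q))) (sN (sN q)))
    else if fN (fN q) = 3 then
      (if sN (sN (fN q)) = 0 then pN 0 (pN (fN (sN (fN q))) (pN 0 (sN (sN q))))
       else pN 0 (pN (headN (sN (sN (fN q)))) (pN (fN (sN q))
         (consN (pN 0 (pN (fN (sN (fN q))) (pN (tailN (sN (sN (fN q)))) (pN (fN (sN q)) 0)))) (sN (sN q))))))
    else if fN (fN q) = 4 then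
      pN 0 (pN (fN (sN (fN q))) (pN (tailN (fN (sN q)))
        (consN (pN 1 (pN (sN (sN (fN q))) (pN 0 (pN (headN (fN (sN q))) (tailN (fN (sN q))))))) (sN (sN q)))))
    else pN 0 (pN (sN (fN q)) (pN (consN 0 (fN (sN q)))
        (consN (pN 2 (pN (sN (fN q)) (pN 0 (fN (sN q))))) (sN (sN q))))))"

definition rtN :: "nat \<Rightarrow> nat" where
  "rtN q = (let r = fN q; K = sN q; fr = headN K; K' = tailN K; ft = fN fr; fa = sN fr in
    if K = 0 then pN 1 q
    else if ft = 0 then
      (if fN (sN fa) = 0 then pN 0 (pN (fN fa) (pN (revN (consN r (sN (sN (sN fa))))) K'))
       else pN 0 (pN (headN (fN (sN fa))) (pN (fN (sN (sN fa)))
          (consN (pN 0 (pN (fN fa) (pN (tailN (fN (sN fa))) (pN (fN (sN (sN fa))) (consN r (sN (sN (sN fa)))))))) K'))))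
    else if ft = 1 then
      (if fN (sN fa) = fN (sN (sN fa)) then pN 1 (pN r K')
       else pN 0 (pN (fN fa) (pN (consN (fN (sN fa)) (consN r (sN (sN (sN fa)))))
          (consN (pN 1 (pN (fN fa) (pN (Suc (fN (sN fa))) (pN (fN (sN (sN fa))) (sN (sN (sN fa))))))) K'))))
    else
      (if r = 0 then pN 1 (pN (fN (sN fa)) K')
       else pN 0 (pN (fN fa) (pN (consN (Suc (fN (sN fa))) (sN (sN fa)))
          (consN (pN 2 (pN (fN fa) (pN (Suc (fN (sN fa))) (sN (sN fa))))) K')))))"

definition stepN :: "nat \<Rightarrow> nat" where
  "stepN s = (if fN s = 0 then evN (sN s) else rtN (sN s))"

lemma stepN_encS: "stepN (encS st) = encS (step st)"
  by (induction st rule: step.induct) (simp_all add: stepN_def evN_def rtN_def Let_def)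

lemma Ptot_evN: "Ptot evN"
  unfolding evN_def by (intro Ptot_if Ptot_fN Ptot_sN Ptot_id Ptot_const Ptot_pN Ptot_Suc Ptot_headN Ptot_tailN Ptot_consN Ptot_nthN)
lemma Ptot_rtN: "Ptot rtN"
  unfolding rtN_def Let_def by (intro Ptot_if Ptot_fN Ptot_sN Ptot_id Ptot_const Ptot_pN Ptot_Suc Ptot_headN Ptot_tailN Ptot_consN Ptot_revN)
lemma Ptot_stepN: "Ptot stepN"
  unfolding stepN_def by (intro Ptot_if Ptot_fN Ptot_sN Ptot_id Ptot_const Ptot_comp[OF Ptot_evN] Ptot_comp[OF Ptot_rtN])


definition initN :: "nat \<Rightarrow> nat \<Rightarrow> nat" where "initN c z = pN 0 (pN c (pN (consN z 0) 0))"

lemma initN_encS: "initN (encp p) z = encS (Ev p [z] [])"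
  unfolding initN_def by simp

lemma stepN_iter: "(stepN ^^ k) (encS st) = encS ((step ^^ k) st)"
  by (induction k) (auto simp: stepN_encS)

lemma encS_halt: "encS st = pN 1 (pN v 0) \<longleftrightarrow> st = Rt v []"
  by (cases st) auto

lemma univ: "precfn 1 F \<Longrightarrow> \<exists>c. \<forall>z v. F [z] = Some v \<longleftrightarrow> (\<exists>k. (stepN ^^ k) (initN c z) = pN 1 (pN v 0))"
proof -
  assume "precfn 1 F"
  then obtain p where p: "repr 1 F p" using precfn_prog by blast
  show ?thesis
  proof (intro exI allI)
    fix z v
    have "F [z] = Some v \<longleftrightarrow> ev p [z] v" using p unfolding repr_def by simp
    also have "\<dots> \<longleftrightarrow> (\<exists>n. (step ^^ n) (Ev p [z] []) = Rt v [])" by (rule machine_iff)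
    also have "\<dots> \<longleftrightarrow> (\<exists>k. (stepN ^^ k) (initN (encp p) z) = pN 1 (pN v 0))"
      unfolding initN_encS stepN_iter encS_halt ..
    finally show "F [z] = Some v \<longleftrightarrow> (\<exists>k. (stepN ^^ k) (initN (encp p) z) = pN 1 (pN v 0))" .
  qed
qed

lemma Ptot_initN[intro]: "Ptot f \<Longrightarrow> Ptot g \<Longrightarrow> Ptot (\<lambda>x. initN (f x) (g x))"
  unfolding initN_def by (intro Ptot_pN Ptot_const Ptot_consN)

lemma Ptot_run[intro]: "Ptot f \<Longrightarrow> Ptot g \<Longrightarrow> Ptot (\<lambda>x. (stepN ^^ f x) (g x))"
  by (intro Ptot_iter Ptot_stepN)


datatype 'a stt = Emp | Bad | Val 'a

definition updA :: "('a \<Rightarrow> 'a \<Rightarrow> bool) \<Rightarrow> 'a stt \<Rightarrow> 'a option \<Rightarrow> 'a stt" where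
  "updA lt st w = (case w of None \<Rightarrow> st | Some v \<Rightarrow> (case st of Emp \<Rightarrow> Val v | Bad \<Rightarrow> Bad
     | Val m \<Rightarrow> if v = m \<or> lt m v then Val v else if lt v m then Val m else Bad))"

fun foldA :: "('a \<Rightarrow> 'a \<Rightarrow> bool) \<Rightarrow> (nat \<Rightarrow> 'a option) \<Rightarrow> nat \<Rightarrow> 'a stt" where
  "foldA lt w 0 = Emp"
| "foldA lt w (Suc i) = updA lt (foldA lt w i) (w i)"

definition outA :: "('a \<Rightarrow> 'a \<Rightarrow> bool) \<Rightarrow> (nat \<Rightarrow> 'a option) \<Rightarrow> nat \<Rightarrow> 'a option" where
  "outA lt w t = (case foldA lt w (Suc t) of Val m \<Rightarrow> Some m | _ \<Rightarrow> None)"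

definition maxS :: "('a \<Rightarrow> 'a \<Rightarrow> bool) \<Rightarrow> 'a set \<Rightarrow> 'a option" where
  "maxS lt S = (if finite S \<and> S \<noteq> {} then Some (THE m. m \<in> S \<and> (\<forall>s\<in>S. s = m \<or> lt s m)) else None)"

lemma maxD_maxS: "maxD lt f y = maxS lt {a. \<exists>t. f y t = Some a}"
  unfolding maxD_def maxS_def Let_def ..

lemma outA_Some: "outA lt w t = Some a \<longleftrightarrow> foldA lt w (Suc t) = Val a"
  unfolding outA_def by (cases "foldA lt w (Suc t)") simp_all

locale spo =
  fixes lt :: "'a \<Rightarrow> 'a \<Rightarrow> bool"
  assumes irr: "\<not> lt a a" and trn: "lt a b \<Longrightarrow> lt b c \<Longrightarrow> lt a c"
begin

definition le' :: "'a \<Rightarrow> 'a \<Rightarrow> bool" where "le' a b \<longleftrightarrow> a = b \<or> lt a b"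

lemma le'_trans: "le' a b \<Longrightarrow> le' b c \<Longrightarrow> le' a c" unfolding le'_def using trn by blast
lemma le'_antisym: "le' a b \<Longrightarrow> le' b a \<Longrightarrow> a = b" unfolding le'_def using trn irr by blast

lemma the_max:
  assumes "m \<in> S" "\<forall>s\<in>S. s = m \<or> lt s m"
  shows "(THE m. m \<in> S \<and> (\<forall>s\<in>S. s = m \<or> lt s m)) = m"
proof (rule the_equality)
  show "m \<in> S \<and> (\<forall>s\<in>S. s = m \<or> lt s m)" using assms by blast
  fix m' assume m': "m' \<in> S \<and> (\<forall>s\<in>S. s = m' \<or> lt s m')"
  then have "m = m' \<or> lt m m'" "m' = m \<or> lt m' m" using assms by auto
  then show "m' = m" by (metis irr trn)
qed

lemma finite_chain_max: "finite S \<Longrightarrow> S \<noteq> {} \<Longrightarrow> (\<forall>a\<in>S. \<forall>b\<in>S. a = b \<or> lt a b \<or> lt b a) \<Longrightarrow> \<exists>m\<in>S. \<forall>s\<in>S. s = m \<or> lt s m"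
proof (induction S rule: finite_ne_induct)
  case (singleton x) then show ?case by simp
next
  case (insert x F)
  then obtain m where m: "m \<in> F" "\<forall>s\<in>F. s = m \<or> lt s m" by auto
  have "x = m \<or> lt x m \<or> lt m x" using insert.prems m(1) by auto
  then show ?case
  proof (elim disjE)
    assume "lt m x" then show ?thesis using m trn by (intro bexI[of _ x]) auto
  qed (use m in auto)
qed

lemma upd_step: "st = Val a \<Longrightarrow> updA lt st w = Bad \<or> (\<exists>b. updA lt st w = Val b \<and> le' a b)"
  unfolding updA_def le'_def by (auto split: option.splits)

lemma fold_mono: "i \<le> j \<Longrightarrow> foldA lt w i = Val a \<Longrightarrow> foldA lt w j = Bad \<or> (\<exists>b. foldA lt w j = Val b \<and> le' a b)"
proof (induction j)
  case 0 then show ?case by (simp add: le'_def)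
next
  case (Suc j)
  show ?case
  proof (cases "i = Suc j")
    case True then show ?thesis using Suc.prems by (simp add: le'_def)
  next
    case False
    then have "i \<le> j" using Suc.prems by simp
    then have "foldA lt w j = Bad \<or> (\<exists>b. foldA lt w j = Val b \<and> le' a b)" using Suc by blast
    then show ?thesis
    proof
      assume "foldA lt w j = Bad" then show ?thesis by (simp add: updA_def split: option.splits)
    next
      assume "\<exists>b. foldA lt w j = Val b \<and> le' a b"
      then obtain b where b: "foldA lt w j = Val b" "le' a b" by blast
      from upd_step[OF b(1), of "w j"] show ?thesis using b(2) le'_trans by auto
    qed
  qed
qed

lemma outA_mono: "t \<le> t' \<Longrightarrow> outA lt w t = Some a \<Longrightarrow> outA lt w t' = Some b \<Longrightarrow> a = b \<or> lt a b"
proof -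
  assume tt: "t \<le> t'" and a: "outA lt w t = Some a" and b: "outA lt w t' = Some b"
  have fa: "foldA lt w (Suc t) = Val a" using a unfolding outA_def by (auto split: stt.splits)
  have fb: "foldA lt w (Suc t') = Val b" using b unfolding outA_def by (auto split: stt.splits)
  show ?thesis using fold_mono[of "Suc t" "Suc t'" w a] tt fa fb by (auto simp: le'_def)
qed

lemma coverage:
  fixes w :: "nat \<Rightarrow> 'a option" and \<phi> :: "nat \<Rightarrow> 'a option"
  assumes mono\<phi>: "\<And>s s' a b. s \<le> s' \<Longrightarrow> \<phi> s = Some a \<Longrightarrow> \<phi> s' = Some b \<Longrightarrow> a = b \<or> lt a b"
    and enum: "\<And>v. (\<exists>i. w i = Some v) \<longleftrightarrow> (\<exists>s. \<phi> s = Some v)"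
  shows "maxS lt {a. \<exists>t. outA lt w t = Some a} = maxS lt {a. \<exists>s. \<phi> s = Some a}"
proof -
  define V where "V = {a. \<exists>s. \<phi> s = Some a}"
  define Ob where "Ob = {a. \<exists>t. outA lt w t = Some a}"
  have chain: "a = b \<or> lt a b \<or> lt b a" if ab: "a \<in> V" "b \<in> V" for a b
  proof -
    obtain s1 s2 where s: "\<phi> s1 = Some a" "\<phi> s2 = Some b" using ab unfolding V_def by blast
    show ?thesis
    proof (cases "s1 \<le> s2")
      case True then show ?thesis using mono\<phi>[OF True s] by blast
    next
      case False then have "s2 \<le> s1" by simp
      then show ?thesis using mono\<phi>[OF _ s(2) s(1)] by blast
    qed
  qed
  have wV: "w j = Some v \<Longrightarrow> v \<in> V" for j v using enum[of v] unfolding V_def by blast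
  have inv: "(foldA lt w i = Emp \<and> (\<forall>j<i. w j = None)) \<or>
             (\<exists>m. foldA lt w i = Val m \<and> m \<in> V \<and> (\<forall>j<i. \<forall>v. w j = Some v \<longrightarrow> le' v m))" for i
  proof (induction i)
    case 0 then show ?case by simp
  next
    case (Suc i)
    show ?case
    proof (cases "w i")
      case None
      then show ?thesis using Suc by (auto simp: updA_def less_Suc_eq)
    next
      case (Some v)
      have vV: "v \<in> V" using wV Some by blast
      from Suc show ?thesis
      proof
        assume e: "foldA lt w i = Emp \<and> (\<forall>j<i. w j = None)"
        then show ?thesis using Some vV by (auto simp: updA_def less_Suc_eq le'_def)
      next
        assume "\<exists>m. foldA lt w i = Val m \<and> m \<in> V \<and> (\<forall>j<i. \<forall>v. w j = Some v \<longrightarrow> le' v m)"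
        then obtain m where m: "foldA lt w i = Val m" "m \<in> V" "\<forall>j<i. \<forall>v. w j = Some v \<longrightarrow> le' v m" by blast
        have c: "v = m \<or> lt m v \<or> lt v m" using chain[OF vV m(2)] by blast
        show ?thesis
        proof (cases "v = m \<or> lt m v")
          case True
          have "foldA lt w (Suc i) = Val v" using m(1) Some True by (simp add: updA_def)
          moreover have "\<forall>j<Suc i. \<forall>u. w j = Some u \<longrightarrow> le' u v"
          proof (intro allI impI)
            fix j u assume j: "j < Suc i" "w j = Some u"
            show "le' u v"
            proof (cases "j = i")
              case True then show ?thesis using j Some by (simp add: le'_def)
            next
              case False then have "j < i" using j(1) by simp
              then have "le' u m" using m(3) j(2) by blast
              then show ?thesis using True le'_trans unfolding le'_def by blast
            qed
          qed
          ultimately show ?thesis using vV by blast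
        next
          case False
          then have lvm: "lt v m" using c by blast
          have "foldA lt w (Suc i) = Val m" using m(1) Some False lvm by (simp add: updA_def)
          moreover have "\<forall>j<Suc i. \<forall>u. w j = Some u \<longrightarrow> le' u m"
            using m(3) Some lvm by (auto simp: less_Suc_eq le'_def)
          ultimately show ?thesis using m(2) by blast
        qed
      qed
    qed
  qed
  have Ob_iff: "a \<in> Ob \<longleftrightarrow> (\<exists>t. foldA lt w (Suc t) = Val a)" for a
    unfolding Ob_def outA_Some by simp
  have ObV: "Ob \<subseteq> V"
  proof
    fix a assume "a \<in> Ob"
    then obtain t where "foldA lt w (Suc t) = Val a" using Ob_iff by blast
    then show "a \<in> V" using inv[of "Suc t"] by auto
  qed
  have cover: "\<exists>m\<in>Ob. le' v m" if vV: "v \<in> V" for v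
  proof -
    obtain i where i: "w i = Some v" using vV enum[of v] unfolding V_def by blast
    from inv[of "Suc i"] i obtain m where "foldA lt w (Suc i) = Val m" "le' v m" by auto
    then show ?thesis using Ob_iff by blast
  qed
  show ?thesis
  proof (cases "finite V")
    case True
    show ?thesis
    proof (cases "V = {}")
      case True
      then have "Ob = {}" using ObV by blast
      then show ?thesis using True unfolding Ob_def V_def maxS_def by simp
    next
      case False
      obtain M where M: "M \<in> V" "\<forall>s\<in>V. s = M \<or> lt s M"
        using finite_chain_max[OF \<open>finite V\<close> False] chain by blast
      obtain m where m: "m \<in> Ob" "le' M m" using cover[OF M(1)] by blast
      have "le' m M" using M(2) ObV m(1) unfolding le'_def by blast
      then have "m = M" using le'_antisym m(2) by blast
      then have MOb: "M \<in> Ob" using m(1) by simp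
      have fOb: "finite Ob" using ObV \<open>finite V\<close> finite_subset by blast
      have "maxS lt Ob = Some M" unfolding maxS_def using fOb MOb the_max[OF MOb] M(2) ObV by auto
      moreover have "maxS lt V = Some M" unfolding maxS_def using True False the_max[OF M] by auto
      ultimately show ?thesis unfolding Ob_def V_def by simp
    qed
  next
    case False
    have "\<not> finite Ob"
    proof
      assume fOb: "finite Ob"
      have "V \<noteq> {}" using False by auto
      then obtain v where "v \<in> V" by blast
      then have "Ob \<noteq> {}" using cover by blast
      moreover have "\<forall>a\<in>Ob. \<forall>b\<in>Ob. a = b \<or> lt a b \<or> lt b a" using chain ObV by blast
      ultimately obtain M where M: "M \<in> Ob" "\<forall>s\<in>Ob. s = M \<or> lt s M" using finite_chain_max[OF fOb] by blast
      have below: "le' v M" if vV: "v \<in> V" for v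
      proof -
        obtain m where "m \<in> Ob" "le' v m" using cover[OF vV] by blast
        then show ?thesis using M(2) le'_trans unfolding le'_def by blast
      qed
      obtain s0 where s0: "\<phi> s0 = Some M" using M(1) ObV unfolding V_def by blast
      have "V \<subseteq> insert M ((\<lambda>s. the (\<phi> s)) ` {..<s0})"
      proof
        fix a assume aV: "a \<in> V"
        then obtain s where s: "\<phi> s = Some a" unfolding V_def by blast
        show "a \<in> insert M ((\<lambda>s. the (\<phi> s)) ` {..<s0})"
        proof (cases "s < s0")
          case True then show ?thesis using s by force
        next
          case False
          then have "s0 \<le> s" by simp
          then have "le' M a" using mono\<phi>[OF _ s0 s] unfolding le'_def by blast
          then have "a = M" using below[OF aV] le'_antisym by blast
          then show ?thesis by simp
        qed
      qed
      then have "finite V" by (rule finite_subset) simp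
      then show False using False by simp
    qed
    then show ?thesis using False unfolding maxS_def Ob_def V_def by simp
  qed
qed

end


lemma fold_map:
  assumes inj: "inj \<rho>"
  shows "foldA lt (\<lambda>i. map_option \<rho> (w i)) i = map_stt \<rho> (foldA (\<lambda>a b. lt (\<rho> a) (\<rho> b)) w i)"
proof (induction i)
  case 0 then show ?case by simp
next
  case (Suc i)
  have inj': "\<rho> a = \<rho> b \<longleftrightarrow> a = b" for a b using inj by (meson injD)
  show ?case
    using Suc by (cases "foldA (\<lambda>a b. lt (\<rho> a) (\<rho> b)) w i"; cases "w i") (auto simp: updA_def inj')
qed

lemma outA_map:
  assumes "inj \<rho>"
  shows "outA lt (\<lambda>i. map_option \<rho> (w i)) t = map_option \<rho> (outA (\<lambda>a b. lt (\<rho> a) (\<rho> b)) w t)"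
  unfolding outA_def fold_map[OF assms] by (cases "foldA (\<lambda>a b. lt (\<rho> a) (\<rho> b)) w (Suc t)") auto

fun encStt :: "nat stt \<Rightarrow> nat" where
  "encStt Emp = 0" | "encStt Bad = 1" | "encStt (Val m) = m + 2"

definition rlN :: "nat \<Rightarrow> nat \<Rightarrow> nat" where
  "rlN N' s = revN (consN (pN 0 s) (tailN (revN N')))"

definition upd2 :: "(nat \<Rightarrow> nat) \<Rightarrow> nat \<Rightarrow> nat \<Rightarrow> nat" where
  "upd2 ind st v = (if st = 0 then v + 2 else if st = 1 then 1 else if v = st - 2 then v + 2
     else if ind (pN (st - 2) v) = 1 then v + 2 else if ind (pN v (st - 2)) = 1 then st else 1)"

definition updN :: "(nat \<Rightarrow> nat) \<Rightarrow> nat \<Rightarrow> nat \<Rightarrow> nat" where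
  "updN ind st R = (if fN R = 1 then (if sN (sN R) = 0 then upd2 ind st (fN (sN R)) else st) else st)"

definition foldstep :: "(nat \<Rightarrow> nat) \<Rightarrow> nat \<Rightarrow> nat" where
  "foldstep ind T = pN (fN T) (pN (Suc (fN (sN T))) (updN ind (sN (sN T))
      ((stepN ^^ sN (fN (sN T))) (initN (fN (fN T)) (rlN (sN (fN T)) (fN (fN (sN T))))))))"

definition finalst :: "(nat \<Rightarrow> nat) \<Rightarrow> nat \<Rightarrow> nat" where
  "finalst ind N = sN (sN ((foldstep ind ^^ Suc (sN (headN (revN (sN (N - 1))))))
      (pN (pN (sN (fN (N - 1))) (sN (N - 1))) (pN 0 0))))"

definition gE :: "(nat \<Rightarrow> nat) \<Rightarrow> nat \<Rightarrow> nat option" where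
  "gE ind N = (if 2 - finalst ind N = 0 then Some (finalst ind N - 2) else None)"

lemma Ptot_rlN[intro]: "Ptot f \<Longrightarrow> Ptot g \<Longrightarrow> Ptot (\<lambda>x. rlN (f x) (g x))"
  unfolding rlN_def by (intro Ptot_revN Ptot_consN Ptot_pN Ptot_const Ptot_tailN)

lemma Ptot_foldstep: assumes i: "Ptot ind" shows "Ptot (foldstep ind)"
  unfolding foldstep_def updN_def upd2_def
  by (intro Ptot_if Ptot_pN Ptot_fN Ptot_sN Ptot_id Ptot_const Ptot_Suc Ptot_run Ptot_initN Ptot_rlN
        Ptot_add Ptot_sub Ptot_comp[OF i])

lemma partrec_gE: "Ptot ind \<Longrightarrow> partrec1 (gE ind)"
proof -
  assume i: "Ptot ind"
  have f: "Ptot (finalst ind)"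
    unfolding finalst_def
    by (intro Ptot_sN Ptot_iter Ptot_foldstep[OF i] Ptot_Suc Ptot_headN Ptot_revN Ptot_pN Ptot_fN Ptot_sub Ptot_id Ptot_const)
  have "partrec1 (\<lambda>N. if 2 - finalst ind N = 0 then Some (finalst ind N - 2) else None)"
    by (rule partrec1_guard) (intro Ptot_sub Ptot_const Ptot_comp[OF f] Ptot_id)+
  then show ?thesis unfolding gE_def[abs_def] .
qed

definition haltv :: "nat \<Rightarrow> nat option" where
  "haltv R = (if fN R = 1 \<and> sN (sN R) = 0 then Some (fN (sN R)) else None)"

lemma haltv_Some: "haltv R = Some v \<longleftrightarrow> R = pN 1 (pN v 0)"
  unfolding haltv_def by (metis pN_fN_sN fN_pN sN_pN option.distinct(1) option.inject)

lemma upd2_enc: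
  assumes ind: "\<And>a b. ind (pN a b) = (if ltc a b then 1 else 0)"
  shows "upd2 ind (encStt st) v = encStt (updA ltc st (Some v))"
  by (cases st) (auto simp: upd2_def updA_def ind)

lemma updN_enc:
  assumes ind: "\<And>a b. ind (pN a b) = (if ltc a b then 1 else 0)"
  shows "updN ind (encStt st) R = encStt (updA ltc st (haltv R))"
  using upd2_enc[where ind=ind and ltc=ltc, OF ind] by (auto simp: updN_def haltv_def updA_def)

definition wseq :: "nat \<Rightarrow> bval list \<Rightarrow> nat \<Rightarrow> nat option" where
  "wseq c x i = haltv ((stepN ^^ sN i) (initN c (enc (x @ [VN (fN i)]))))"

lemma enc_snoc: "enc (x @ [VN t]) = list_encode (map enc_val x @ [pN 0 t])"
  unfolding enc_def pN_def by simp

lemma rlN_enc: "rlN (enc (x @ [VN t])) s = enc (x @ [VN s])"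
  unfolding rlN_def enc_snoc by simp

lemma t_enc: "sN (headN (revN (enc (x @ [VN t])))) = t"
  unfolding enc_snoc by (simp add: hdd_def)

lemma fold_nat:
  assumes ind: "\<And>a b. ind (pN a b) = (if ltc a b then 1 else 0)"
  shows "(foldstep ind ^^ k) (pN (pN c (enc (x @ [VN t]))) (pN 0 0)) =
         pN (pN c (enc (x @ [VN t]))) (pN k (encStt (foldA ltc (wseq c x) k)))"
proof (induction k)
  case 0 then show ?case by simp
next
  case (Suc k)
  have "(foldstep ind ^^ Suc k) (pN (pN c (enc (x @ [VN t]))) (pN 0 0)) =
        foldstep ind (pN (pN c (enc (x @ [VN t]))) (pN k (encStt (foldA ltc (wseq c x) k))))"
    using Suc by simp
  also have "\<dots> = pN (pN c (enc (x @ [VN t]))) (pN (Suc k) (encStt (foldA ltc (wseq c x) (Suc k))))"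
    unfolding foldstep_def by (simp add: rlN_enc updN_enc[where ind=ind and ltc=ltc, OF ind] wseq_def del: foldA.simps) (simp add: wseq_def)
  finally show ?case .
qed

lemma enc_cons: "enc ((VN n # x) @ [VN t]) = Suc (pN (pN 0 n) (enc (x @ [VN t])))"
  unfolding enc_def by (simp add: consN_def pN_def)

lemma gE_enc:
  assumes ind: "\<And>a b. ind (pN a b) = (if ltc a b then 1 else 0)"
  shows "gE ind (enc ((VN n # x) @ [VN t])) = outA ltc (wseq n x) t"
proof -
  have "finalst ind (enc ((VN n # x) @ [VN t])) = encStt (foldA ltc (wseq n x) (Suc t))"
    unfolding finalst_def enc_cons using fold_nat[where ind=ind and ltc=ltc, OF ind, of "Suc t" n x t] by (simp add: t_enc del: foldA.simps)
  then show ?thesis unfolding gE_def outA_def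
    by (cases "foldA ltc (wseq n x) (Suc t)") auto
qed


lemma in_space_cons: "in_space (CN # X) y \<longleftrightarrow> (\<exists>n x. y = VN n # x \<and> in_space X x)"
proof
  assume "in_space (CN # X) y"
  then obtain v x where y: "y = v # x" "in_comp CN v" "in_space X x"
    unfolding in_space_def by (auto simp: list_all2_Cons1)
  then obtain n where "v = VN n" by (cases v) auto
  then show "\<exists>n x. y = VN n # x \<and> in_space X x" using y by blast
next
  assume "\<exists>n x. y = VN n # x \<and> in_space X x"
  then show "in_space (CN # X) y" unfolding in_space_def by auto
qed

theorem mainTheorem6:
  fixes X :: "bcomp list" and lt :: "'d \<Rightarrow> 'd \<Rightarrow> bool" and \<rho> :: "nat \<Rightarrow> 'd"
  assumes "X \<noteq> []"
    and "computable_poset lt \<rho>"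
  shows "\<exists>E. E \<in> MaxPR (CN # X) lt \<rho> \<and>
             {(\<lambda>x. E (VN n # x)) | n. True} = MaxPR X lt \<rho>"
proof -
  have bij: "bij \<rho>" and irr: "\<And>a. \<not> lt a a" and trn: "\<And>a b c. lt a b \<Longrightarrow> lt b c \<Longrightarrow> lt a c"
    and tr: "totalrec1 (\<lambda>p. if lt (\<rho> (fst (prod_decode p))) (\<rho> (snd (prod_decode p))) then 1 else 0)"
    using assms(2) unfolding computable_poset_def by blast+
  define ltc where "ltc = (\<lambda>a b. lt (\<rho> a) (\<rho> b))"
  define ind where "ind = (\<lambda>p. if lt (\<rho> (fst (prod_decode p))) (\<rho> (snd (prod_decode p))) then 1 else (0::nat))"
  have Pind: "Ptot ind" using tr unfolding ind_def totalrec1_Ptot .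
  have indp: "\<And>a b. ind (pN a b) = (if ltc a b then 1 else 0)" by (simp add: ind_def ltc_def pN_def)
  interpret S: spo lt by unfold_locales (use irr trn in blast)+
  interpret S2: spo ltc by unfold_locales (use irr trn in \<open>auto simp: ltc_def\<close>)
  have inj: "inj \<rho>" using bij bij_is_inj by blast
  have invr: "inv \<rho> (\<rho> a) = a" for a using inj by simp
  have rinv: "\<rho> (inv \<rho> v) = v" for v using bij by (meson bij_inv_eq_iff)
  define fE where "fE = (\<lambda>y t. case y of VN n # x \<Rightarrow> if in_space (CN # X) y then map_option \<rho> (outA ltc (wseq n x) t) else None | _ \<Rightarrow> None)"
  have fE_cons: "fE (VN n # x) t = (if in_space X x then map_option \<rho> (outA ltc (wseq n x) t) else None)" for n x t
    unfolding fE_def using in_space_cons[of X "VN n # x"] by auto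
  have fE_none: "\<not> in_space (CN # X) y \<Longrightarrow> fE y t = None" for y t
    unfolding fE_def by (auto split: list.splits bval.splits)
  have gEe: "gE ind (enc ((VN n # x) @ [VN t])) = outA ltc (wseq n x) t" for n x t
    by (rule gE_enc[where ltc=ltc, OF indp])
  have pcE: "pc2 \<rho> (CN # X) fE" unfolding pc2_def
  proof (intro exI conjI allI impI)
    show "partrec1 (gE ind)" by (rule partrec_gE[OF Pind])
    fix y t assume "in_space (CN # X) y"
    then obtain n x where y: "y = VN n # x" "in_space X x" using in_space_cons by blast
    show "map_option (inv \<rho>) (fE y t) = gE ind (enc (y @ [VN t]))"
      unfolding y(1) fE_cons gEe using y(2) by (simp add: option.map_comp o_def invr option.map_ident)
  qed
  have monoE: "mono2 lt fE" unfolding mono2_def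
  proof (intro allI impI)
    fix y t t' a b assume tt: "t \<le> t'" and a: "fE y t = Some a" and b: "fE y t' = Some b"
    have "in_space (CN # X) y" using a fE_none by (metis option.distinct(1))
    then obtain n x where y: "y = VN n # x" "in_space X x" using in_space_cons by blast
    obtain a' where a': "outA ltc (wseq n x) t = Some a'" "a = \<rho> a'" using a y(2) unfolding y(1) fE_cons by auto
    obtain b' where b': "outA ltc (wseq n x) t' = Some b'" "b = \<rho> b'" using b y(2) unfolding y(1) fE_cons by auto
    show "a = b \<or> lt a b" using S2.outA_mono[OF tt a'(1) b'(1)] a'(2) b'(2) unfolding ltc_def by auto
  qed
  define E where "E = maxD lt fE"
  have EM: "E \<in> MaxPR (CN # X) lt \<rho>" unfolding MaxPR_def E_def using pcE monoE fE_none by blast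
  have rows: "(\<lambda>x. E (VN n # x)) \<in> MaxPR X lt \<rho>" for n
  proof -
    define fn where "fn = (\<lambda>x t. fE (VN n # x) t)"
    have eq: "(\<lambda>x. E (VN n # x)) = maxD lt fn" unfolding E_def fn_def maxD_def by simp
    have pcn: "pc2 \<rho> X fn" unfolding pc2_def
    proof (intro exI conjI allI impI)
      have "Ptot (\<lambda>N. Suc (pN (pN 0 n) N))" by (intro Ptot_Suc Ptot_pN Ptot_const Ptot_id)
      then show "partrec1 (\<lambda>N. gE ind (Suc (pN (pN 0 n) N)))" by (rule partrec1_comp[OF partrec_gE[OF Pind]])
      fix x t assume x: "in_space X x"
      show "map_option (inv \<rho>) (fn x t) = gE ind (Suc (pN (pN 0 n) (enc (x @ [VN t]))))"
        unfolding fn_def fE_cons enc_cons[symmetric] gEe using x by (simp add: option.map_comp o_def invr option.map_ident)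
    qed
    have monon: "mono2 lt fn" using monoE unfolding mono2_def fn_def by blast
    have nonen: "\<not> in_space X x \<Longrightarrow> fn x t = None" for x t unfolding fn_def fE_cons by simp
    show ?thesis unfolding eq MaxPR_def using pcn monon nonen by blast
  qed
  have cover: "M \<in> {(\<lambda>x. E (VN n # x)) | n. True}" if M: "M \<in> MaxPR X lt \<rho>" for M
  proof -
    obtain \<phi> where \<phi>: "M = maxD lt \<phi>" "pc2 \<rho> X \<phi>" "mono2 lt \<phi>" "\<forall>y t. \<not> in_space X y \<longrightarrow> \<phi> y t = None"
      using M unfolding MaxPR_def by blast
    obtain g where g: "partrec1 g" "\<forall>y t. in_space X y \<longrightarrow> map_option (inv \<rho>) (\<phi> y t) = g (enc (y @ [VN t]))"
      using \<phi>(2) unfolding pc2_def by blast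
    obtain F where F: "precfn 1 F" "\<forall>x. g x = F [x]" using g(1) unfolding partrec1_def by blast
    obtain c where c: "\<forall>z v. F [z] = Some v \<longleftrightarrow> (\<exists>k. (stepN ^^ k) (initN c z) = pN 1 (pN v 0))"
      using univ[OF F(1)] by blast
    have "M = (\<lambda>x. E (VN c # x))"
    proof
      fix x
      show "M x = E (VN c # x)"
      proof (cases "in_space X x")
        case False
        then show ?thesis unfolding \<phi>(1) E_def maxD_def fE_cons using \<phi>(4) by simp
      next
        case True
        define w' where "w' = (\<lambda>i. map_option \<rho> (wseq c x i))"
        have fEw: "fE (VN c # x) t = outA lt w' t" for t
          unfolding fE_cons w'_def outA_map[OF inj] ltc_def using True by simp
        have monophi: "\<And>s s' a b. s \<le> s' \<Longrightarrow> \<phi> x s = Some a \<Longrightarrow> \<phi> x s' = Some b \<Longrightarrow> a = b \<or> lt a b"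
          using \<phi>(3) unfolding mono2_def by blast
        have enum: "(\<exists>i. w' i = Some v) \<longleftrightarrow> (\<exists>s. \<phi> x s = Some v)" for v
        proof -
          have e1: "w' i = Some v \<longleftrightarrow> wseq c x i = Some (inv \<rho> v)" for i
            unfolding w'_def using invr rinv by (cases "wseq c x i") auto
          have "(\<exists>i. w' i = Some v) \<longleftrightarrow> (\<exists>i. (stepN ^^ sN i) (initN c (enc (x @ [VN (fN i)]))) = pN 1 (pN (inv \<rho> v) 0))"
            unfolding e1 wseq_def haltv_Some ..
          also have "\<dots> \<longleftrightarrow> (\<exists>s k. (stepN ^^ k) (initN c (enc (x @ [VN s]))) = pN 1 (pN (inv \<rho> v) 0))"
            by (metis fN_pN sN_pN)
          also have "\<dots> \<longleftrightarrow> (\<exists>s. g (enc (x @ [VN s])) = Some (inv \<rho> v))" using c F(2) by simp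
          also have "\<dots> \<longleftrightarrow> (\<exists>s. \<phi> x s = Some v)"
          proof -
            have "g (enc (x @ [VN s])) = Some (inv \<rho> v) \<longleftrightarrow> \<phi> x s = Some v" for s
              using g(2)[rule_format, OF True, of s, symmetric] invr rinv by (cases "\<phi> x s") (auto, metis)
            then show ?thesis by simp
          qed
          finally show ?thesis .
        qed
        have "maxD lt fE (VN c # x) = maxS lt {a. \<exists>t. outA lt w' t = Some a}"
          unfolding maxD_maxS fEw ..
        also have "\<dots> = maxS lt {a. \<exists>s. \<phi> x s = Some a}"
          by (rule S.coverage[OF monophi enum])
        also have "\<dots> = M x" unfolding \<phi>(1) maxD_maxS ..
        finally show ?thesis unfolding E_def by simp
      qed
    qed
    then show ?thesis by blast
  qed
  show ?thesis
  proof (intro exI conjI)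
    show "E \<in> MaxPR (CN # X) lt \<rho>" by (rule EM)
    show "{(\<lambda>x. E (VN n # x)) | n. True} = MaxPR X lt \<rho>" using rows cover by blast
  qed
qed


end
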